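(* Let $k\in\mathbb N_0$ and $f\in\mathcal C^k(\mathbb S^2)$. Then the DFS function $\tilde f$ of $f$ belongs to $\mathcal C^k(\mathbb T^2)$ and $$\|\tilde f\|_{\mathcal C^k(\mathbb T^2)}\le\tfrac34(k+3)!\,\|f\|_{\mathcal C^k(\mathbb S^2)}.$$
   Context: Notation: $\|\cdot\|$ Euclidean norm; $B^d_k:=\{\beta\in\mathbb N_0^d: |\beta|=\sum_i\beta_i\le k\}$. For open $U\subset\mathbb R^d$: $\mathcal C(U)$ is the set of bounded uniformly continuous $f\colon U\to\mathbb C$; for $k\ge1$, $\mathcal C^k(U)$ consists of $f$ whose classical partial derivatives $D^\beta f$, $\beta\in B^d_k$, exist and lie in $\mathcal C(U)$, with $\|f\|_{\mathcal C^k(U)}=\sum_{\beta\in B^d_k}\sup_U|D^\beta f|$ ($\mathcal C^0=\mathcal C$). Torus: $\mathbb T^2=\mathbb R^2/(2\pi\mathbb Z^2)$, functions identified with $2\pi$-biperiodic functions on $\mathbb R^2$; $\mathcal C^k(\mathbb T^2)$ is the set of $2\pi$-biperiodic elements of $\mathcal C^k(\mathbb R^2)$ with the same norm. Sphere: $\mathbb S^2=\{x\in\mathbb R^3:\|x\|=1\}$. For $f\colon\mathbb S^2\to\mathbb C$, a $\mathcal C^k$-extension of $f$ is some $f^*\in\mathcal C^k(U)$, $U\supset\mathbb S^2$ open, with $f^*|_{\mathbb S^2}=f$; set $|f^*|^*_{\mathcal C^k(\mathbb S^2)}:=\sum_{\beta\in B^3_k}\sup_{\xi\in\mathbb S^2}|D^\beta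 f^*(\xi)|$ and $\|f\|_{\mathcal C^k(\mathbb S^2)}:=\inf$ of $|f^*|^*_{\mathcal C^k(\mathbb S^2)}$ over all $\mathcal C^k$-extensions; $\mathcal C^k(\mathbb S^2)$ is the set of $f$ with finite norm. DFS: $\phi(\lambda,\theta)=(\cos\lambda\sin\theta,\sin\lambda\sin\theta,\cos\theta)$; the DFS function of $f$ is $\tilde f:=f\circ\phi\colon\mathbb T^2\to\mathbb C$. *)

theory Defs
  imports "HOL-Analysis.Analysis"
begin

definition pd_exists :: "'n::finite \<Rightarrow> ((real,'n) vec \<Rightarrow> complex) \<Rightarrow> (real,'n) vec \<Rightarrow> bool" where
  "pd_exists i f x \<longleftrightarrow> (\<lambda>t::real. f (x + t *\<^sub>R axis i 1)) differentiable (at 0)"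

definition pd :: "'n::finite \<Rightarrow> ((real,'n) vec \<Rightarrow> complex) \<Rightarrow> (real,'n) vec \<Rightarrow> complex" where
  "pd i f x = vector_derivative (\<lambda>t::real. f (x + t *\<^sub>R axis i 1)) (at 0)"

text \<open>Iterated partial derivatives along a list of directions: the head is applied last.\<close>
fun dlist :: "'n::finite list \<Rightarrow> ((real,'n) vec \<Rightarrow> complex) \<Rightarrow> (real,'n) vec \<Rightarrow> complex" where
  "dlist [] f = f"
| "dlist (i # is) f = pd i (dlist is f)"

fun dlist_ok :: "((real,'n::finite) vec) set \<Rightarrow> 'n list \<Rightarrow> ((real,'n) vec \<Rightarrow> complex) \<Rightarrow> bool" where
  "dlist_ok U [] f = True"
| "dlist_ok U (i # is) f \<longleftrightarrow> dlist_ok U is f \<and> (\<forall>x\<in>U. pd_exists i (dlist is f) x)"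

text \<open>Multi-index to direction list: D^beta = d_1^{beta_1} ... d_d^{beta_d}.\<close>
definition mlist :: "('n::{finite,linorder} \<Rightarrow> nat) \<Rightarrow> 'n list" where
  "mlist \<beta> = concat (map (\<lambda>i. replicate (\<beta> i) i) (sorted_list_of_set UNIV))"

definition Dpart :: "('n::{finite,linorder} \<Rightarrow> nat) \<Rightarrow> ((real,'n) vec \<Rightarrow> complex) \<Rightarrow> (real,'n) vec \<Rightarrow> complex" where
  "Dpart \<beta> f = dlist (mlist \<beta>) f"

definition Dpart_exists :: "((real,'n::{finite,linorder}) vec) set \<Rightarrow> ('n \<Rightarrow> nat) \<Rightarrow> ((real,'n) vec \<Rightarrow> complex) \<Rightarrow> bool" where
  "Dpart_exists U \<beta> f \<longleftrightarrow> dlist_ok U (mlist \<beta>) f"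

definition multi_idx :: "nat \<Rightarrow> ('n::finite \<Rightarrow> nat) set" where
  "multi_idx k = {\<beta>. (\<Sum>i\<in>UNIV. \<beta> i) \<le> k}"

definition Ck :: "nat \<Rightarrow> ((real,'n::{finite,linorder}) vec) set \<Rightarrow> ((real,'n) vec \<Rightarrow> complex) \<Rightarrow> bool" where
  "Ck k U f \<longleftrightarrow> open U \<and> (\<forall>\<beta>\<in>multi_idx k. Dpart_exists U \<beta> f \<and>
      bounded (Dpart \<beta> f ` U) \<and> uniformly_continuous_on U (Dpart \<beta> f))"

definition Ck_norm :: "nat \<Rightarrow> ((real,'n::{finite,linorder}) vec) set \<Rightarrow> ((real,'n) vec \<Rightarrow> complex) \<Rightarrow> real" where
  "Ck_norm k U f = (\<Sum>\<beta>\<in>multi_idx k. (SUP x\<in>U. cmod (Dpart \<beta> f x)))"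

definition Ck_torus :: "nat \<Rightarrow> (real^2 \<Rightarrow> complex) \<Rightarrow> bool" where
  "Ck_torus k f \<longleftrightarrow> Ck k UNIV f \<and> (\<forall>x i. f (x + (2*pi) *\<^sub>R axis i 1) = f x)"

definition Ck_torus_norm :: "nat \<Rightarrow> (real^2 \<Rightarrow> complex) \<Rightarrow> real" where
  "Ck_torus_norm k f = Ck_norm k UNIV f"

abbreviation S2 :: "(real^3) set" where
  "S2 \<equiv> sphere 0 1"

definition is_Ck_extension :: "nat \<Rightarrow> (real^3 \<Rightarrow> complex) \<Rightarrow> (real^3) set \<Rightarrow> (real^3 \<Rightarrow> complex) \<Rightarrow> bool" where
  "is_Ck_extension k f U g \<longleftrightarrow> S2 \<subseteq> U \<and> Ck k U g \<and> (\<forall>\<xi>\<in>S2. g \<xi> = f \<xi>)"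

definition ext_seminorm :: "nat \<Rightarrow> (real^3 \<Rightarrow> complex) \<Rightarrow> real" where
  "ext_seminorm k g = (\<Sum>\<beta>\<in>multi_idx k. (SUP \<xi>\<in>S2. cmod (Dpart \<beta> g \<xi>)))"

definition Ck_sphere_norm :: "nat \<Rightarrow> (real^3 \<Rightarrow> complex) \<Rightarrow> real" where
  "Ck_sphere_norm k f = Inf {ext_seminorm k g | g U. is_Ck_extension k f U g}"

text \<open>f in C^k(S^2) iff its norm is finite, i.e. some C^k-extension exists
  (only the values of f on S2 are relevant).\<close>
definition Ck_sphere :: "nat \<Rightarrow> (real^3 \<Rightarrow> complex) \<Rightarrow> bool" where
  "Ck_sphere k f \<longleftrightarrow> (\<exists>U g. is_Ck_extension k f U g)"

definition dfs_phi :: "real^2 \<Rightarrow> real^3" where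
  "dfs_phi p = vector [cos (p$1) * sin (p$2), sin (p$1) * sin (p$2), cos (p$2)]"

definition dfs :: "(real^3 \<Rightarrow> complex) \<Rightarrow> real^2 \<Rightarrow> complex" where
  "dfs f = f \<circ> dfs_phi"

end

theory Submission
  imports Defs
begin

lemma pd_works:
  "pd_exists i h x \<Longrightarrow> ((\<lambda>t. h (x + t *\<^sub>R axis i 1)) has_vector_derivative pd i h x) (at 0)"
  unfolding pd_exists_def pd_def by (simp add: vector_derivative_works[symmetric])

lemma pd_intro:
  "((\<lambda>t. h (x + t *\<^sub>R axis i 1)) has_vector_derivative D) (at 0) \<Longrightarrow> pd_exists i h x \<and> pd i h x = D"
  unfolding pd_exists_def pd_def
  by (metis differentiableI_vector vector_derivative_at)

lemma line_vd:
  fixes h :: "(real,'n::finite) vec \<Rightarrow> complex"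
  assumes "pd_exists i h (y + \<tau> *\<^sub>R axis i 1)"
  shows "((\<lambda>t. h (y + t *\<^sub>R axis i 1)) has_vector_derivative pd i h (y + \<tau> *\<^sub>R axis i 1)) (at \<tau>)"
proof -
  let ?z = "y + \<tau> *\<^sub>R axis i 1"
  have 1: "((\<lambda>t. h (?z + t *\<^sub>R axis i 1)) has_vector_derivative pd i h ?z) (at ((\<lambda>t. t - \<tau>) \<tau>))"
    using pd_works[OF assms] by simp
  have 2: "((\<lambda>t. t - \<tau>) has_vector_derivative 1) (at \<tau>)"
    by (auto intro!: derivative_eq_intros)
  have "(((\<lambda>t. h (?z + t *\<^sub>R axis i 1)) \<circ> (\<lambda>t. t - \<tau>)) has_vector_derivative (1 *\<^sub>R pd i h ?z)) (at \<tau>)"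
    by (rule vector_diff_chain_at[OF 2 1])
  moreover have "((\<lambda>t. h (?z + t *\<^sub>R axis i 1)) \<circ> (\<lambda>t. t - \<tau>)) = (\<lambda>t. h (y + t *\<^sub>R axis i 1))"
    by (auto simp: algebra_simps)
  ultimately show ?thesis by simp
qed

lemma pd_cong1:
  fixes ha :: "(real,'n::finite) vec \<Rightarrow> complex"
  assumes "open U" "x \<in> U" "\<And>y. y \<in> U \<Longrightarrow> ha y = hb y" "pd_exists i ha x"
  shows "pd_exists i hb x \<and> pd i hb x = pd i ha x"
proof -
  let ?S = "(\<lambda>t. x + t *\<^sub>R axis i 1) -` U"
  have o: "open ?S"
    by (rule open_vimage[OF assms(1)]) (intro continuous_intros)
  have z: "0 \<in> ?S" using assms(2) by simp
  have e: "\<And>t. t \<in> ?S \<Longrightarrow> ha (x + t *\<^sub>R axis i 1) = hb (x + t *\<^sub>R axis i 1)"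
    using assms(3) by simp
  have "((\<lambda>t. hb (x + t *\<^sub>R axis i 1)) has_vector_derivative pd i ha x) (at 0)"
    by (rule has_vector_derivative_transform_within_open[OF pd_works[OF assms(4)] o z e])
  then show ?thesis by (rule pd_intro)
qed

lemma pd_cong:
  fixes ha :: "(real,'n::finite) vec \<Rightarrow> complex"
  assumes "open U" "x \<in> U" "\<And>y. y \<in> U \<Longrightarrow> ha y = hb y"
  shows "pd_exists i ha x = pd_exists i hb x \<and> (pd_exists i ha x \<longrightarrow> pd i ha x = pd i hb x)"
proof -
  have b: "\<And>y. y \<in> U \<Longrightarrow> hb y = ha y" using assms(3) by simp
  have c1: "pd_exists i hb x \<and> pd i hb x = pd i ha x" if "pd_exists i ha x" for i
    using pd_cong1[of U x ha hb i] assms that by blast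
  have c2: "pd_exists i ha x \<and> pd i ha x = pd i hb x" if "pd_exists i hb x" for i
    using pd_cong1[of U x hb ha i] assms b that by blast
  show ?thesis
  proof (intro conjI impI iffI)
    show "pd_exists i hb x" if "pd_exists i ha x" using c1[OF that] by (rule conjunct1)
    show "pd_exists i ha x" if "pd_exists i hb x" using c2[OF that] by (rule conjunct1)
    show "pd i ha x = pd i hb x" if "pd_exists i ha x" using c1[OF that] by (simp only:)
  qed
qed

lemma mvi:
  fixes f :: "real \<Rightarrow> 'a::real_normed_vector"
  assumes d: "\<And>t. \<bar>t\<bar> \<le> \<bar>s\<bar> \<Longrightarrow> (f has_vector_derivative f' t) (at t)"
     and b: "\<And>t. \<bar>t\<bar> \<le> \<bar>s\<bar> \<Longrightarrow> norm (f' t) \<le> B"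
  shows "norm (f s - f 0) \<le> B * \<bar>s\<bar>"
proof -
  let ?S = "{-\<bar>s\<bar>..\<bar>s\<bar>}"
  have 1: "(f has_derivative (\<lambda>xa. xa *\<^sub>R f' x)) (at x within ?S)" if "x \<in> ?S" for x
  proof -
    have "\<bar>x\<bar> \<le> \<bar>s\<bar>" using that by auto
    then have "(f has_vector_derivative f' x) (at x)" by (rule d)
    then show ?thesis unfolding has_vector_derivative_def by (rule has_derivative_at_withinI)
  qed
  have 2: "onorm (\<lambda>xa. xa *\<^sub>R f' x) \<le> B" if "x \<in> ?S" for x
  proof -
    have "\<bar>x\<bar> \<le> \<bar>s\<bar>" using that by auto
    moreover have "onorm (\<lambda>xa::real. xa *\<^sub>R f' x) = norm (f' x)"
      using onorm_scaleR_left[OF bounded_linear_ident, of "f' x"] onorm_id[where 'a=real] by simp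
    ultimately show ?thesis using b[of x] by simp
  qed
  have "norm (f s - f 0) \<le> B * norm (s - 0)"
    by (rule differentiable_bound[where S="?S", OF convex_real_interval(5) 1 2]) auto
  then show ?thesis by simp
qed


lemma axis_nth': "axis i x $ j = (if j = i then x else 0)"
  by (simp add: axis_def)

lemma norm_le_vec:
  fixes w v :: "(real,'n::finite) vec"
  assumes "\<And>l. \<bar>w$l\<bar> \<le> \<bar>v$l\<bar>"
  shows "norm w \<le> norm v"
  unfolding norm_vec_def by (rule L2_set_mono) (use assms in auto)

lemma sum_axis_nth:
  fixes c :: "'n::finite \<Rightarrow> real"
  assumes "finite I"
  shows "(\<Sum>i\<in>I. c i *\<^sub>R (axis i 1 :: (real,'n) vec)) $ l = (if l \<in> I then c l else 0)"
  using assms by (induction I rule: finite_induct) (auto simp: axis_def)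

lemma sum_axis_nth2:
  fixes c :: "'n::finite \<Rightarrow> real"
  assumes "finite I"
  shows "(\<Sum>i\<in>I. c i * (axis i 1 :: (real,'n) vec) $ l) = (if l \<in> I then c l else 0)"
  using assms by (induction I rule: finite_induct) (auto simp: axis_nth')

lemma common_radius:
  fixes F :: "'n::finite \<Rightarrow> 'a::metric_space \<Rightarrow> 'b::real_normed_vector"
  assumes "open U" "x \<in> U" "\<And>i. continuous_on U (F i)" "\<epsilon> > 0"
  shows "\<exists>r>0. ball x r \<subseteq> U \<and> (\<forall>y\<in>ball x r. \<forall>i. norm (F i y - F i x) \<le> \<epsilon>)"
proof -
  have "\<forall>i. \<exists>d>0. \<forall>y\<in>U. dist y x < d \<longrightarrow> dist (F i y) (F i x) < \<epsilon>"
    using assms(2,3,4) unfolding continuous_on_iff by blast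
  then obtain d where d: "\<And>i. d i > 0" "\<And>i y. y \<in> U \<Longrightarrow> dist y x < d i \<Longrightarrow> dist (F i y) (F i x) < \<epsilon>"
    by metis
  obtain r0 where r0: "r0 > 0" "ball x r0 \<subseteq> U" using assms(1,2) open_contains_ball by blast
  define r where "r = min r0 (Min (range d))"
  have "Min (range d) > 0" using d(1) by (simp add: Min_gr_iff)
  then have r: "r > 0" using r0 by (simp add: r_def)
  have rd: "r \<le> d i" for i unfolding r_def by (simp add: min.coboundedI2)
  show ?thesis
  proof (intro exI[of _ r] conjI ballI allI r)
    show "ball x r \<subseteq> U" using r0 unfolding r_def by auto
    fix y i assume y: "y \<in> ball x r"
    then have "y \<in> U" using r0 unfolding r_def by auto
    moreover have "dist y x < d i" using y rd[of i] by (simp add: dist_commute)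
    ultimately have "dist (F i y) (F i x) < \<epsilon>" by (rule d(2))
    then show "norm (F i y - F i x) \<le> \<epsilon>" by (simp add: dist_norm)
  qed
qed

lemma cp:
  fixes h :: "(real,'n::finite) vec \<Rightarrow> complex"
  assumes U: "open U" "x \<in> U"
    and ex: "\<And>y i. y \<in> U \<Longrightarrow> pd_exists i h y"
    and cont: "\<And>i. continuous_on U (pd i h)"
  shows "(h has_derivative (\<lambda>v. \<Sum>i\<in>UNIV. of_real (v$i) * pd i h x)) (at x)"
  unfolding has_derivative_at_alt
proof (intro conjI allI impI)
  show "bounded_linear (\<lambda>v. \<Sum>i\<in>UNIV. of_real (v$i) * pd i h x)"
    by (intro bounded_linear_sum bounded_linear_compose[OF bounded_linear_mult_left
          bounded_linear_compose[OF bounded_linear_of_real bounded_linear_vec_nth]])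
  fix e :: real assume e: "e > 0"
  define \<epsilon> where "\<epsilon> = e / real CARD('n)"
  have \<epsilon>: "\<epsilon> > 0" using e by (simp add: \<epsilon>_def)
  obtain r where r: "r > 0" "ball x r \<subseteq> U" "\<And>y i. y\<in>ball x r \<Longrightarrow> norm (pd i h y - pd i h x) \<le> \<epsilon>"
    using common_radius[where F="\<lambda>i. pd i h", OF U cont \<epsilon>] by blast
  show "\<exists>d>0. \<forall>y. norm (y - x) < d \<longrightarrow>
      norm (h y - h x - (\<Sum>i\<in>UNIV. of_real ((y - x)$i) * pd i h x)) \<le> e * norm (y - x)"
  proof (intro exI[of _ r] conjI allI impI)
    show "r > 0" by (rule r)
    fix y assume y: "norm (y - x) < r"
    define v where "v = y - x"
    have key: "norm (h (x + (\<Sum>i\<in>I. v$i *\<^sub>R axis i 1)) - h x - (\<Sum>i\<in>I. of_real (v$i) * pd i h x))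
               \<le> \<epsilon> * (\<Sum>i\<in>I. \<bar>v$i\<bar>)" if "finite I" for I
      using that
    proof (induction I rule: finite_induct)
      case empty show ?case by simp
    next
      case (insert j I)
      define z where "z = x + (\<Sum>i\<in>I. v$i *\<^sub>R axis i 1)"
      have pts: "z + t *\<^sub>R axis j 1 \<in> ball x r" if t: "\<bar>t\<bar> \<le> \<bar>v$j\<bar>" for t
      proof -
        have "norm ((z + t *\<^sub>R axis j 1) - x) \<le> norm v"
        proof (rule norm_le_vec)
          fix l
          show "\<bar>(z + t *\<^sub>R axis j 1 - x) $ l\<bar> \<le> \<bar>v $ l\<bar>"
          proof -
            have "(z + t *\<^sub>R axis j 1 - x) $ l = (if l \<in> I then v$l else 0) + t * axis j 1 $ l"
              by (simp add: z_def sum_axis_nth2[OF insert.hyps(1)])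
            then show ?thesis using insert.hyps t by (auto simp: axis_nth')
          qed
        qed
        then show ?thesis using y by (simp add: v_def dist_norm norm_minus_commute)
      qed
      have mv: "norm ((h (z + v$j *\<^sub>R axis j 1) - of_real (v$j) * pd j h x) - (h (z + 0 *\<^sub>R axis j 1) - of_real 0 * pd j h x))
           \<le> \<epsilon> * \<bar>v$j\<bar>"
      proof (rule mvi[where f'="\<lambda>t. pd j h (z + t *\<^sub>R axis j 1) - pd j h x"])
        fix t :: real assume t: "\<bar>t\<bar> \<le> \<bar>v$j\<bar>"
        have "z + t *\<^sub>R axis j 1 \<in> U" using pts[OF t] r(2) by blast
        then have "((\<lambda>t. h (z + t *\<^sub>R axis j 1)) has_vector_derivative pd j h (z + t *\<^sub>R axis j 1)) (at t)"
          by (intro line_vd ex)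
        moreover have "((\<lambda>t. of_real t * pd j h x) has_vector_derivative 1 * pd j h x) (at t)"
          by (intro has_vector_derivative_mult_left) (use has_vector_derivative_of_real[OF DERIV_ident] in simp)
        ultimately show "((\<lambda>t. h (z + t *\<^sub>R axis j 1) - of_real t * pd j h x) has_vector_derivative
            pd j h (z + t *\<^sub>R axis j 1) - pd j h x) (at t)"
          using has_vector_derivative_diff by fastforce
        show "norm (pd j h (z + t *\<^sub>R axis j 1) - pd j h x) \<le> \<epsilon>"
          using r(3)[OF pts[OF t]] .
      qed
      have eq: "x + (\<Sum>i\<in>insert j I. v$i *\<^sub>R axis i 1) = z + v$j *\<^sub>R axis j 1"
        using insert.hyps by (simp add: z_def algebra_simps)
      have "norm (h (x + (\<Sum>i\<in>insert j I. v$i *\<^sub>R axis i 1)) - h x - (\<Sum>i\<in>insert j I. of_real (v$i) * pd i h x))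
          = norm ((h (z + v$j *\<^sub>R axis j 1) - of_real (v$j) * pd j h x - h z)
                 + (h z - h x - (\<Sum>i\<in>I. of_real (v$i) * pd i h x)))"
        using insert.hyps by (simp add: eq z_def algebra_simps)
      also have "\<dots> \<le> norm (h (z + v$j *\<^sub>R axis j 1) - of_real (v$j) * pd j h x - h z)
                 + norm (h z - h x - (\<Sum>i\<in>I. of_real (v$i) * pd i h x))"
        by (rule norm_triangle_ineq)
      also have "\<dots> \<le> \<epsilon> * \<bar>v$j\<bar> + \<epsilon> * (\<Sum>i\<in>I. \<bar>v$i\<bar>)"
        using mv insert.IH unfolding z_def by (intro add_mono) (auto simp: algebra_simps)
      also have "\<dots> = \<epsilon> * (\<Sum>i\<in>insert j I. \<bar>v$i\<bar>)"
        using insert.hyps by (simp add: algebra_simps)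
      finally show ?case .
    qed
    have "x + (\<Sum>i\<in>UNIV. v$i *\<^sub>R axis i 1) = y"
      using basis_expansion[of v] by (simp add: v_def scalar_mult_eq_scaleR)
    then have "norm (h y - h x - (\<Sum>i\<in>UNIV. of_real (v$i) * pd i h x)) \<le> \<epsilon> * (\<Sum>i\<in>UNIV. \<bar>v$i\<bar>)"
      using key[of UNIV] by simp
    also have "\<dots> \<le> \<epsilon> * (\<Sum>i\<in>(UNIV::'n set). norm v)"
      using \<epsilon> by (intro mult_left_mono sum_mono component_le_norm_cart) auto
    also have "\<dots> = e * norm v" using \<epsilon>_def by simp
    finally show "norm (h y - h x - (\<Sum>i\<in>UNIV. of_real ((y - x)$i) * pd i h x)) \<le> e * norm (y - x)"
      by (simp add: v_def)
  qed
qed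


lemma pd_small:
  fixes h :: "(real,'n::finite) vec \<Rightarrow> complex"
  assumes "pd_exists i h y" "e > 0"
  shows "\<exists>\<delta>>0. \<forall>s. \<bar>s\<bar> < \<delta> \<longrightarrow> norm (h (y + s *\<^sub>R axis i 1) - h y - of_real s * pd i h y) \<le> e * \<bar>s\<bar>"
proof -
  have "((\<lambda>s. h (y + s *\<^sub>R axis i 1)) has_derivative (\<lambda>s. s *\<^sub>R pd i h y)) (at 0)"
    using pd_works[OF assms(1)] by (simp add: has_vector_derivative_def)
  then have "\<forall>e>0. \<exists>d>0. \<forall>s. norm (s - 0) < d \<longrightarrow>
      norm (h (y + s *\<^sub>R axis i 1) - h (y + 0 *\<^sub>R axis i 1) - (s - 0) *\<^sub>R pd i h y) \<le> e * norm (s - 0)"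
    unfolding has_derivative_at_alt by (rule conjunct2)
  from this[rule_format, OF assms(2)] obtain \<delta> where d1: "\<delta> > 0" and d2: "\<forall>s. norm (s - 0) < \<delta> \<longrightarrow>
      norm (h (y + s *\<^sub>R axis i 1) - h (y + 0 *\<^sub>R axis i 1) - (s - 0) *\<^sub>R pd i h y) \<le> e * norm (s - 0)"
    by blast
  show ?thesis
  proof (intro exI[of _ \<delta>] conjI allI impI)
    show "\<delta> > 0" by (rule d1)
    fix s :: real assume "\<bar>s\<bar> < \<delta>"
    then have "norm (s - 0) < \<delta>" by simp
    from d2[rule_format, OF this] show "norm (h (y + s *\<^sub>R axis i 1) - h y - of_real s * pd i h y) \<le> e * \<bar>s\<bar>"
      by (simp add: scaleR_conv_of_real)
  qed
qed

lemma norm_two_axis: "norm (\<sigma> *\<^sub>R axis a (1::real) + \<tau> *\<^sub>R axis b 1) \<le> \<bar>\<sigma>\<bar> + \<bar>\<tau>\<bar>"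
proof -
  have "norm (\<sigma> *\<^sub>R axis a (1::real) + \<tau> *\<^sub>R axis b 1) \<le> norm (\<sigma> *\<^sub>R axis a (1::real)) + norm (\<tau> *\<^sub>R axis b (1::real))"
    by (rule norm_triangle_ineq)
  also have "\<dots> = \<bar>\<sigma>\<bar> + \<bar>\<tau>\<bar>" by simp
  finally show ?thesis .
qed

lemma ps:
  fixes h :: "(real,'n::finite) vec \<Rightarrow> complex"
  assumes U: "open U" "x \<in> U"
   and ea: "\<And>y. y\<in>U \<Longrightarrow> pd_exists a h y" and eb: "\<And>y. y \<in> U \<Longrightarrow> pd_exists b h y"
   and eab: "\<And>y. y \<in> U \<Longrightarrow> pd_exists a (pd b h) y"
   and cont: "continuous_on U (pd a (pd b h))"
  shows "pd_exists b (pd a h) x \<and> pd b (pd a h) x = pd a (pd b h) x"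
proof -
  define c where "c = pd a (pd b h) x"
  let ?A = "axis a 1 :: (real,'n) vec"
  let ?B = "axis b 1 :: (real,'n) vec"
  have main: "\<exists>d>0. \<forall>t. norm (t - 0) < d \<longrightarrow>
        norm (pd a h (x + t *\<^sub>R ?B) - pd a h (x + 0 *\<^sub>R ?B) - (t - 0) *\<^sub>R c) \<le> e * norm (t - 0)"
    if e: "e > 0" for e
  proof -
    have "\<exists>r>0. ball x r \<subseteq> U \<and> (\<forall>y\<in>ball x r. \<forall>i::unit. norm (pd a (pd b h) y - pd a (pd b h) x) \<le> e)"
      by (rule common_radius[where F="\<lambda>_::unit. pd a (pd b h)", OF U cont e])
    then obtain r where r: "r > 0" "ball x r \<subseteq> U" "\<forall>y\<in>ball x r. \<forall>i::unit. norm (pd a (pd b h) y - c) \<le> e"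
      unfolding c_def by blast
    have r3: "norm (pd a (pd b h) y - c) \<le> e" if "y \<in> ball x r" for y
      using r(3) that by blast
    define d where "d = r / 2"
    have d: "d > 0" using r by (simp add: d_def)
    have inU: "x + \<sigma> *\<^sub>R ?A + \<tau> *\<^sub>R ?B \<in> ball x r" if "\<bar>\<sigma>\<bar> < d" "\<bar>\<tau>\<bar> < d" for \<sigma> \<tau>
    proof -
      have "norm (\<sigma> *\<^sub>R ?A + \<tau> *\<^sub>R ?B) \<le> \<bar>\<sigma>\<bar> + \<bar>\<tau>\<bar>" by (rule norm_two_axis)
      then have "norm (\<sigma> *\<^sub>R ?A + \<tau> *\<^sub>R ?B) < r" using that by (simp add: d_def)
      moreover have "dist x (x + \<sigma> *\<^sub>R ?A + \<tau> *\<^sub>R ?B) = norm (\<sigma> *\<^sub>R ?A + \<tau> *\<^sub>R ?B)"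
        by (metis add.assoc add_diff_cancel_left' dist_commute dist_norm)
      ultimately show ?thesis by simp
    qed
    have inU': "x + \<sigma> *\<^sub>R ?A + \<tau> *\<^sub>R ?B \<in> U" if "\<bar>\<sigma>\<bar> < d" "\<bar>\<tau>\<bar> < d" for \<sigma> \<tau>
      using inU[OF that] r(2) by (rule subsetD[rotated])
    show ?thesis
    proof (intro exI[of _ d] conjI allI impI d)
      fix t :: real assume "norm (t - 0) < d"
      then have t: "\<bar>t\<bar> < d" by simp
      have step1: "norm (pd b h (x + s *\<^sub>R ?A + \<tau> *\<^sub>R ?B) - pd b h (x + \<tau> *\<^sub>R ?B) - of_real s * c) \<le> e * \<bar>s\<bar>"
        if s: "\<bar>s\<bar> < d" and \<tau>: "\<bar>\<tau>\<bar> < d" for s \<tau>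
      proof -
        have "norm ((pd b h (x + \<tau> *\<^sub>R ?B + s *\<^sub>R ?A) - of_real s * c) - (pd b h (x + \<tau> *\<^sub>R ?B + 0 *\<^sub>R ?A) - of_real 0 * c)) \<le> e * \<bar>s\<bar>"
        proof (rule mvi[where f'="\<lambda>\<sigma>. pd a (pd b h) (x + \<tau> *\<^sub>R ?B + \<sigma> *\<^sub>R ?A) - c"])
          fix \<sigma> :: real assume \<sigma>: "\<bar>\<sigma>\<bar> \<le> \<bar>s\<bar>"
          then have \<sigma>': "\<bar>\<sigma>\<bar> < d" using s by simp
          have pt: "x + \<tau> *\<^sub>R ?B + \<sigma> *\<^sub>R ?A = x + \<sigma> *\<^sub>R ?A + \<tau> *\<^sub>R ?B" by (simp add: algebra_simps)
          have inb: "x + \<tau> *\<^sub>R ?B + \<sigma> *\<^sub>R ?A \<in> ball x r" using inU[OF \<sigma>' \<tau>] unfolding pt .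
          then have "x + \<tau> *\<^sub>R ?B + \<sigma> *\<^sub>R ?A \<in> U" using r(2) by (rule subsetD[rotated])
          then have "pd_exists a (pd b h) (x + \<tau> *\<^sub>R ?B + \<sigma> *\<^sub>R ?A)" by (rule eab)
          then have 1: "((\<lambda>\<sigma>. pd b h (x + \<tau> *\<^sub>R ?B + \<sigma> *\<^sub>R ?A)) has_vector_derivative pd a (pd b h) (x + \<tau> *\<^sub>R ?B + \<sigma> *\<^sub>R ?A)) (at \<sigma>)"
            by (rule line_vd)
          have 2: "((\<lambda>t. of_real t * c) has_vector_derivative 1 * c) (at \<sigma>)"
            by (intro has_vector_derivative_mult_left) (use has_vector_derivative_of_real[OF DERIV_ident] in simp)
          show "((\<lambda>\<sigma>. pd b h (x + \<tau> *\<^sub>R ?B + \<sigma> *\<^sub>R ?A) - of_real \<sigma> * c) has_vector_derivative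
              pd a (pd b h) (x + \<tau> *\<^sub>R ?B + \<sigma> *\<^sub>R ?A) - c) (at \<sigma>)"
            using has_vector_derivative_diff[OF 1 2] by simp
          show "norm (pd a (pd b h) (x + \<tau> *\<^sub>R ?B + \<sigma> *\<^sub>R ?A) - c) \<le> e"
            by (rule r3[OF inb])
        qed
        moreover have "x + \<tau> *\<^sub>R ?B + s *\<^sub>R ?A = x + s *\<^sub>R ?A + \<tau> *\<^sub>R ?B" by (simp add: algebra_simps)
        ultimately show ?thesis by (simp add: algebra_simps)
      qed
      have step2: "norm ((h (x + s *\<^sub>R ?A + t *\<^sub>R ?B) - h (x + t *\<^sub>R ?B) - h (x + s *\<^sub>R ?A) + h x) - of_real t * (of_real s * c))
          \<le> e * \<bar>s\<bar> * \<bar>t\<bar>" if s: "\<bar>s\<bar> < d" for s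
      proof -
        have "norm ((h (x + s *\<^sub>R ?A + t *\<^sub>R ?B) - h (x + t *\<^sub>R ?B) - of_real t * (of_real s * c))
                  - (h (x + s *\<^sub>R ?A + 0 *\<^sub>R ?B) - h (x + 0 *\<^sub>R ?B) - of_real 0 * (of_real s * c))) \<le> (e * \<bar>s\<bar>) * \<bar>t\<bar>"
        proof (rule mvi[where f'="\<lambda>\<tau>. pd b h (x + s *\<^sub>R ?A + \<tau> *\<^sub>R ?B) - pd b h (x + \<tau> *\<^sub>R ?B) - of_real s * c"])
          fix \<tau> :: real assume \<tau>: "\<bar>\<tau>\<bar> \<le> \<bar>t\<bar>"
          then have \<tau>': "\<bar>\<tau>\<bar> < d" using t by simp
          have "x + s *\<^sub>R ?A + \<tau> *\<^sub>R ?B \<in> U" by (rule inU'[OF s \<tau>'])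
          then have "pd_exists b h (x + s *\<^sub>R ?A + \<tau> *\<^sub>R ?B)" by (rule eb)
          then have 1: "((\<lambda>\<tau>. h (x + s *\<^sub>R ?A + \<tau> *\<^sub>R ?B)) has_vector_derivative pd b h (x + s *\<^sub>R ?A + \<tau> *\<^sub>R ?B)) (at \<tau>)"
            by (rule line_vd)
          have "x + 0 *\<^sub>R ?A + \<tau> *\<^sub>R ?B \<in> U" using d by (intro inU' \<tau>') simp
          then have "pd_exists b h (x + \<tau> *\<^sub>R ?B)" using eb by simp
          then have 2: "((\<lambda>\<tau>. h (x + \<tau> *\<^sub>R ?B)) has_vector_derivative pd b h (x + \<tau> *\<^sub>R ?B)) (at \<tau>)"
            by (rule line_vd)
          have 3: "((\<lambda>t. of_real t * (of_real s * c)) has_vector_derivative 1 * (of_real s * c)) (at \<tau>)"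
            by (intro has_vector_derivative_mult_left) (use has_vector_derivative_of_real[OF DERIV_ident] in simp)
          show "((\<lambda>\<tau>. h (x + s *\<^sub>R ?A + \<tau> *\<^sub>R ?B) - h (x + \<tau> *\<^sub>R ?B) - of_real \<tau> * (of_real s * c)) has_vector_derivative
              pd b h (x + s *\<^sub>R ?A + \<tau> *\<^sub>R ?B) - pd b h (x + \<tau> *\<^sub>R ?B) - of_real s * c) (at \<tau>)"
            using has_vector_derivative_diff[OF has_vector_derivative_diff[OF 1 2] 3] by simp
          show "norm (pd b h (x + s *\<^sub>R ?A + \<tau> *\<^sub>R ?B) - pd b h (x + \<tau> *\<^sub>R ?B) - of_real s * c) \<le> e * \<bar>s\<bar>"
            by (rule step1[OF s \<tau>'])
        qed
        then show ?thesis by (simp add: algebra_simps)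
      qed
      have step3: "norm (pd a h (x + t *\<^sub>R ?B) - pd a h x - of_real t * c) \<le> e * \<bar>t\<bar> + e'" if e': "e' > 0" for e'
      proof -
        have e2: "e'/2 > 0" using e' by simp
        have "x + 0 *\<^sub>R ?A + t *\<^sub>R ?B \<in> U" using d by (intro inU' t) simp
        then have x0: "x + t *\<^sub>R ?B \<in> U" by simp
        obtain \<delta>1 where \<delta>1: "\<delta>1 > 0" and \<delta>1': "\<forall>s. \<bar>s\<bar> < \<delta>1 \<longrightarrow>
           norm (h (x + t *\<^sub>R ?B + s *\<^sub>R ?A) - h (x + t *\<^sub>R ?B) - of_real s * pd a h (x + t *\<^sub>R ?B)) \<le> (e'/2) * \<bar>s\<bar>"
          using pd_small[OF ea[OF x0] e2] by blast
        obtain \<delta>0 where \<delta>0: "\<delta>0 > 0" and \<delta>0': "\<forall>s. \<bar>s\<bar> < \<delta>0 \<longrightarrow>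
           norm (h (x + s *\<^sub>R ?A) - h x - of_real s * pd a h x) \<le> (e'/2) * \<bar>s\<bar>"
          using pd_small[OF ea[OF U(2)] e2] by blast
        define s where "s = min (min \<delta>1 \<delta>0) d / 2"
        have s: "s > 0" "\<bar>s\<bar> < \<delta>1" "\<bar>s\<bar> < \<delta>0" "\<bar>s\<bar> < d" using \<delta>1 \<delta>0 d by (auto simp: s_def)
        define D1 where "D1 = pd a h (x + t *\<^sub>R ?B)"
        define D0 where "D0 = pd a h x"
        define P1 where "P1 = h (x + t *\<^sub>R ?B + s *\<^sub>R ?A) - h (x + t *\<^sub>R ?B) - of_real s * D1"
        define P0 where "P0 = h (x + s *\<^sub>R ?A) - h x - of_real s * D0"
        define P2 where "P2 = (h (x + s *\<^sub>R ?A + t *\<^sub>R ?B) - h (x + t *\<^sub>R ?B) - h (x + s *\<^sub>R ?A) + h x) - of_real t * (of_real s * c)"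
        have n1: "norm P1 \<le> (e'/2) * s" using \<delta>1'[rule_format, OF s(2)] s(1) unfolding P1_def D1_def by simp
        have n0: "norm P0 \<le> (e'/2) * s" using \<delta>0'[rule_format, OF s(3)] s(1) unfolding P0_def D0_def by simp
        have n2: "norm P2 \<le> e * s * \<bar>t\<bar>" using step2[OF s(4)] s(1) unfolding P2_def by simp
        have eqA: "x + t *\<^sub>R ?B + s *\<^sub>R ?A = x + s *\<^sub>R ?A + t *\<^sub>R ?B" by (simp add: algebra_simps)
        have eq: "of_real s * (D1 - D0 - of_real t * c) = - P1 + P0 + P2"
          unfolding P1_def P0_def P2_def eqA by (simp add: algebra_simps)
        have "s * norm (D1 - D0 - of_real t * c) = norm (of_real s * (D1 - D0 - of_real t * c))"
          using s(1) by (simp add: norm_mult)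
        also have "\<dots> = norm (- P1 + P0 + P2)" by (simp only: eq)
        also have "\<dots> \<le> norm (- P1 + P0) + norm P2" by (rule norm_triangle_ineq)
        also have "\<dots> \<le> norm (- P1) + norm P0 + norm P2" using norm_triangle_ineq[of "-P1" P0] by simp
        also have "\<dots> \<le> (e'/2) * s + (e'/2) * s + e * s * \<bar>t\<bar>" using n1 n0 n2 by simp
        also have "\<dots> = s * (e * \<bar>t\<bar> + e')" by (simp add: algebra_simps)
        finally have "s * norm (D1 - D0 - of_real t * c) \<le> s * (e * \<bar>t\<bar> + e')" .
        then show ?thesis using s(1) unfolding D1_def D0_def by simp
      qed
      have "norm (pd a h (x + t *\<^sub>R ?B) - pd a h x - of_real t * c) \<le> e * \<bar>t\<bar>"
        by (rule field_le_epsilon) (rule step3)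
      then show "norm (pd a h (x + t *\<^sub>R ?B) - pd a h (x + 0 *\<^sub>R ?B) - (t - 0) *\<^sub>R c) \<le> e * norm (t - 0)"
        by (simp add: scaleR_conv_of_real)
    qed
  qed
  have "((\<lambda>t. pd a h (x + t *\<^sub>R ?B)) has_derivative (\<lambda>t. t *\<^sub>R c)) (at 0)"
    unfolding has_derivative_at_alt
  proof (intro conjI allI impI)
    show "bounded_linear (\<lambda>t::real. t *\<^sub>R c)" by (rule bounded_linear_scaleR_left)
    fix e :: real assume "e > 0"
    then show "\<exists>d>0. \<forall>t. norm (t - 0) < d \<longrightarrow>
        norm (pd a h (x + t *\<^sub>R ?B) - pd a h (x + 0 *\<^sub>R ?B) - (t - 0) *\<^sub>R c) \<le> e * norm (t - 0)"
      by (rule main)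
  qed
  then have "((\<lambda>t. pd a h (x + t *\<^sub>R ?B)) has_vector_derivative c) (at 0)"
    by (simp add: has_vector_derivative_def)
  then show ?thesis unfolding c_def by (rule pd_intro)
qed


lemma mlist_cons:
  fixes \<beta> :: "'n::{finite,linorder} \<Rightarrow> nat"
  assumes z: "\<And>l. l < j \<Longrightarrow> \<beta> l = 0"
  shows "mlist (\<beta>(j := Suc (\<beta> j))) = j # mlist \<beta>"
proof -
  define L where "L = sorted_list_of_set (UNIV::'n set)"
  have sL: "sorted_wrt (<) L" unfolding L_def by (rule strict_sorted_list_of_set)
  have dL: "distinct L" unfolding L_def by (rule distinct_sorted_list_of_set)
  have "j \<in> set L" unfolding L_def by simp
  then obtain L1 L2 where L: "L = L1 @ j # L2" by (meson split_list)
  have l1: "l < j" if "l \<in> set L1" for l using sL that unfolding L by (simp add: sorted_wrt_append)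
  have jn1: "j \<notin> set L1" and jn2: "j \<notin> set L2" using dL unfolding L by auto
  define \<beta>' where "\<beta>' = \<beta>(j := Suc (\<beta> j))"
  have c1: "concat (map (\<lambda>i. replicate (\<beta> i) i) L1) = []"
    using l1 z by (induction L1) auto
  have c1': "concat (map (\<lambda>i. replicate (\<beta>' i) i) L1) = []"
    using l1 z jn1 unfolding \<beta>'_def by (induction L1) auto
  have c2: "map (\<lambda>i. replicate (\<beta>' i) i) L2 = map (\<lambda>i. replicate (\<beta> i) i) L2"
    using jn2 unfolding \<beta>'_def by (intro map_cong) auto
  have bj: "\<beta>' j = Suc (\<beta> j)" unfolding \<beta>'_def by simp
  have "mlist \<beta>' = concat (map (\<lambda>i. replicate (\<beta>' i) i) L1) @ replicate (\<beta>' j) j @ concat (map (\<lambda>i. replicate (\<beta>' i) i) L2)"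
    unfolding mlist_def L_def[symmetric] L by simp
  also have "\<dots> = j # (concat (map (\<lambda>i. replicate (\<beta> i) i) L1) @ replicate (\<beta> j) j @ concat (map (\<lambda>i. replicate (\<beta> i) i) L2))"
    unfolding c1 c1' c2 bj by simp
  also have "\<dots> = j # mlist \<beta>"
    unfolding mlist_def L_def[symmetric] L by simp
  finally show ?thesis unfolding \<beta>'_def .
qed

lemma mlist_zero: "mlist (\<lambda>_. 0) = []"
  unfolding mlist_def by (induction "sorted_list_of_set (UNIV::'a set)") auto

lemma sum_inc:
  fixes \<alpha> :: "'n::finite \<Rightarrow> nat"
  shows "(\<Sum>l\<in>UNIV. (\<alpha>(i := Suc (\<alpha> i))) l) = Suc (\<Sum>l\<in>UNIV. \<alpha> l)"
proof -
  have "(\<Sum>l\<in>UNIV. (\<alpha>(i := Suc (\<alpha> i))) l) = (\<alpha>(i := Suc (\<alpha> i))) i + (\<Sum>l\<in>UNIV-{i}. (\<alpha>(i := Suc (\<alpha> i))) l)"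
    by (rule sum.remove) auto
  also have "(\<Sum>l\<in>UNIV-{i}. (\<alpha>(i := Suc (\<alpha> i))) l) = (\<Sum>l\<in>UNIV-{i}. \<alpha> l)"
    by (rule sum.cong) auto
  also have "(\<Sum>l\<in>UNIV. \<alpha> l) = \<alpha> i + (\<Sum>l\<in>UNIV-{i}. \<alpha> l)"
    by (rule sum.remove) auto
  ultimately show ?thesis by simp
qed

lemma claimC:
  fixes g :: "(real,'n::{finite,linorder}) vec \<Rightarrow> complex"
  assumes U: "open U"
    and H: "\<And>\<beta>. \<beta> \<in> multi_idx k \<Longrightarrow> Dpart_exists U \<beta> g \<and> continuous_on U (Dpart \<beta> g)"
  shows "(\<Sum>l\<in>UNIV. \<alpha> l) < k \<Longrightarrow> x \<in> U \<Longrightarrow>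
     pd_exists i (Dpart \<alpha> g) x \<and> pd i (Dpart \<alpha> g) x = Dpart (\<alpha>(i := Suc (\<alpha> i))) g x"
proof (induction "\<Sum>l\<in>UNIV. \<alpha> l" arbitrary: \<alpha> i x rule: less_induct)
  case less
  define n where "n = (\<Sum>l\<in>UNIV. \<alpha> l)"
  have nk: "n < k" using less.prems n_def by simp
  define \<delta> where "\<delta> = \<alpha>(i := Suc (\<alpha> i))"
  have s\<delta>: "(\<Sum>l\<in>UNIV. \<delta> l) = Suc n" unfolding \<delta>_def n_def by (rule sum_inc)
  have \<delta>k: "\<delta> \<in> multi_idx k" using nk s\<delta> unfolding multi_idx_def by simp
  show ?case
  proof (cases "\<forall>l<i. \<alpha> l = 0")
    case True
    then have ml: "mlist \<delta> = i # mlist \<alpha>" unfolding \<delta>_def by (intro mlist_cons) auto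
    from H[OF \<delta>k] have "dlist_ok U (i # mlist \<alpha>) g" unfolding Dpart_exists_def ml by simp
    then have "pd_exists i (Dpart \<alpha> g) x" using less.prems(2) unfolding Dpart_def by simp
    moreover have "pd i (Dpart \<alpha> g) x = Dpart \<delta> g x" unfolding Dpart_def ml by simp
    ultimately show ?thesis unfolding \<delta>_def by simp
  next
    case False
    then obtain l0 where l0: "l0 < i" "\<alpha> l0 \<noteq> 0" by blast
    define Z where "Z = {l. \<alpha> l \<noteq> 0}"
    have fZ: "finite Z" by simp
    have l0Z: "l0 \<in> Z" using l0 unfolding Z_def by simp
    define j where "j = Min Z"
    have "j \<in> Z" unfolding j_def using fZ l0Z by (intro Min_in) auto
    then have aj: "\<alpha> j \<noteq> 0" unfolding Z_def by simp
    have jl0: "j \<le> l0" unfolding j_def using fZ l0Z by (rule Min_le)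
    have ji: "j < i" using jl0 l0(1) by simp
    have zj: "\<alpha> l = 0" if "l < j" for l
    proof (rule ccontr)
      assume "\<alpha> l \<noteq> 0"
      then have "l \<in> Z" unfolding Z_def by simp
      then have "j \<le> l" unfolding j_def using fZ by (intro Min_le)
      then show False using that by simp
    qed
    define \<alpha>' where "\<alpha>' = \<alpha>(j := \<alpha> j - 1)"
    have \<alpha>eq: "\<alpha>'(j := Suc (\<alpha>' j)) = \<alpha>" unfolding \<alpha>'_def using aj by (auto simp: fun_eq_iff)
    have z': "\<alpha>' l = 0" if "l < j" for l using zj[OF that] that unfolding \<alpha>'_def by simp
    have ml\<alpha>: "mlist \<alpha> = j # mlist \<alpha>'" using mlist_cons[of j \<alpha>', OF z'] unfolding \<alpha>eq by simp
    have sum\<alpha>': "Suc (\<Sum>l\<in>UNIV. \<alpha>' l) = n" using sum_inc[of \<alpha>' j] unfolding \<alpha>eq n_def by simp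
    define h where "h = Dpart \<alpha>' g"
    have Dph: "Dpart \<alpha> g = pd j h" unfolding Dpart_def h_def ml\<alpha> by simp
    define \<gamma> where "\<gamma> = \<alpha>'(i := Suc (\<alpha>' i))"
    have IH: "pd_exists i h y \<and> pd i h y = Dpart \<gamma> g y" if "y \<in> U" for y
    proof -
      have lt1: "(\<Sum>l\<in>UNIV. \<alpha>' l) < (\<Sum>l\<in>UNIV. \<alpha> l)" using sum\<alpha>' unfolding n_def by simp
      have lt2: "(\<Sum>l\<in>UNIV. \<alpha>' l) < k" using sum\<alpha>' nk by simp
      show ?thesis unfolding h_def \<gamma>_def by (rule less.hyps[OF lt1 lt2 that])
    qed
    have z\<gamma>: "\<gamma> l = 0" if "l < j" for l using z'[OF that] that ji unfolding \<gamma>_def by simp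
    have \<gamma>eq: "\<gamma>(j := Suc (\<gamma> j)) = \<delta>"
      unfolding \<gamma>_def \<delta>_def \<alpha>'_def using aj ji by (auto simp: fun_eq_iff)
    have ml\<gamma>: "mlist \<delta> = j # mlist \<gamma>" using mlist_cons[of j \<gamma>, OF z\<gamma>] unfolding \<gamma>eq by simp
    have \<alpha>k: "\<alpha> \<in> multi_idx k" using nk unfolding multi_idx_def n_def by simp
    have ea: "pd_exists j h y" if "y \<in> U" for y
      using H[OF \<alpha>k] that unfolding Dpart_exists_def ml\<alpha> h_def Dpart_def by simp
    have eb: "pd_exists i h y" if "y \<in> U" for y using IH[OF that] by simp
    have ex\<gamma>: "pd_exists j (Dpart \<gamma> g) y" if "y \<in> U" for y
      using H[OF \<delta>k] that unfolding Dpart_exists_def ml\<gamma> Dpart_def by simp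
    have val\<gamma>: "pd j (Dpart \<gamma> g) y = Dpart \<delta> g y" for y
      unfolding Dpart_def ml\<gamma> by simp
    have eqU: "pd i h y = Dpart \<gamma> g y" if "y \<in> U" for y using IH[OF that] by simp
    have cg: "pd_exists j (Dpart \<gamma> g) y = pd_exists j (pd i h) y \<and>
        (pd_exists j (Dpart \<gamma> g) y \<longrightarrow> pd j (Dpart \<gamma> g) y = pd j (pd i h) y)" if "y \<in> U" for y
      by (rule pd_cong[OF U that]) (simp add: eqU)
    have eab: "pd_exists j (pd i h) y" if "y \<in> U" for y using cg[OF that] ex\<gamma>[OF that] by simp
    have vab: "pd j (pd i h) y = Dpart \<delta> g y" if "y \<in> U" for y
      using cg[OF that] ex\<gamma>[OF that] val\<gamma>[of y] by simp
    have c\<delta>: "continuous_on U (Dpart \<delta> g)" using H[OF \<delta>k] by (rule conjunct2)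
    have cont: "continuous_on U (pd j (pd i h))"
      by (rule iffD2[OF continuous_on_cong[OF refl vab] c\<delta>])
    have "pd_exists i (pd j h) x \<and> pd i (pd j h) x = pd j (pd i h) x"
      by (rule ps[OF U less.prems(2) ea eb eab cont])
    then show ?thesis using vab[OF less.prems(2)] unfolding Dph \<delta>_def by simp
  qed
qed

lemma sym_list:
  fixes g :: "(real,'n::{finite,linorder}) vec \<Rightarrow> complex"
  assumes U: "open U"
    and H: "\<And>\<beta>. \<beta> \<in> multi_idx k \<Longrightarrow> Dpart_exists U \<beta> g \<and> continuous_on U (Dpart \<beta> g)"
  shows "length s \<le> k \<Longrightarrow> dlist_ok U s g \<and> (\<exists>\<alpha>. (\<Sum>l\<in>UNIV. \<alpha> l) = length s \<and> (\<forall>x\<in>U. dlist s g x = Dpart \<alpha> g x))"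
proof (induction s)
  case Nil
  have "Dpart (\<lambda>_. 0) g = g" unfolding Dpart_def mlist_zero by simp
  then show ?case by (intro conjI exI[of _ "\<lambda>_. 0"]) auto
next
  case (Cons i s)
  then have "length s \<le> k" by simp
  from Cons.IH[OF this] obtain \<alpha> where ok: "dlist_ok U s g" and s\<alpha>: "(\<Sum>l\<in>UNIV. \<alpha> l) = length s"
    and eq: "\<And>x. x \<in> U \<Longrightarrow> dlist s g x = Dpart \<alpha> g x" by blast
  have lt: "(\<Sum>l\<in>UNIV. \<alpha> l) < k" using s\<alpha> Cons.prems by simp
  have R: "pd_exists i (dlist s g) x \<and> pd i (dlist s g) x = Dpart (\<alpha>(i := Suc (\<alpha> i))) g x" if x: "x \<in> U" for x
  proof -
    have C: "pd_exists i (Dpart \<alpha> g) x \<and> pd i (Dpart \<alpha> g) x = Dpart (\<alpha>(i := Suc (\<alpha> i))) g x"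
      by (rule claimC[OF U H lt x])
    have "pd_exists i (dlist s g) x = pd_exists i (Dpart \<alpha> g) x \<and>
        (pd_exists i (dlist s g) x \<longrightarrow> pd i (dlist s g) x = pd i (Dpart \<alpha> g) x)"
      by (rule pd_cong[OF U x]) (rule eq)
    then show ?thesis using C by simp
  qed
  show ?case
  proof (intro conjI exI[of _ "\<alpha>(i := Suc (\<alpha> i))"])
    show "dlist_ok U (i # s) g" using ok R by simp
    show "(\<Sum>l\<in>UNIV. (\<alpha>(i := Suc (\<alpha> i))) l) = length (i # s)" using s\<alpha> sum_inc[of \<alpha> i] by simp
    show "\<forall>x\<in>U. dlist (i # s) g x = Dpart (\<alpha>(i := Suc (\<alpha> i))) g x" using R by simp
  qed
qed

lemma finite_multi_idx: "finite (multi_idx k :: ('n::finite \<Rightarrow> nat) set)"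
proof (rule finite_subset)
  show "multi_idx k \<subseteq> (PiE UNIV (\<lambda>_. {0..k}) :: ('n \<Rightarrow> nat) set)"
  proof
    fix \<beta> :: "'n \<Rightarrow> nat" assume "\<beta> \<in> multi_idx k"
    then have "(\<Sum>l\<in>UNIV. \<beta> l) \<le> k" unfolding multi_idx_def by simp
    moreover have "\<beta> i \<le> (\<Sum>l\<in>UNIV. \<beta> l)" for i by (rule member_le_sum) auto
    ultimately have "\<beta> i \<le> k" for i using le_trans by blast
    then have "\<forall>i. \<beta> i \<in> {0..k}" by simp
    then show "\<beta> \<in> PiE UNIV (\<lambda>_. {0..k})" by (simp add: PiE_UNIV_domain)
  qed
  show "finite (PiE UNIV (\<lambda>_. {0..k}) :: ('n \<Rightarrow> nat) set)" by (rule finite_PiE) auto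
qed

context
  fixes g :: "(real,'n::{finite,linorder}) vec \<Rightarrow> complex" and U k
  assumes U: "open U"
    and H: "\<And>\<beta>. \<beta> \<in> multi_idx k \<Longrightarrow> Dpart_exists U \<beta> g \<and> continuous_on U (Dpart \<beta> g)"
begin

lemma dlist_cont: "length s \<le> k \<Longrightarrow> continuous_on U (dlist s g)"
proof -
  assume "length s \<le> k"
  from sym_list[OF U H this] obtain \<alpha> where s\<alpha>: "(\<Sum>l\<in>UNIV. \<alpha> l) = length s"
    and eq: "\<And>x. x \<in> U \<Longrightarrow> dlist s g x = Dpart \<alpha> g x" by blast
  have "\<alpha> \<in> multi_idx k" using s\<alpha> \<open>length s \<le> k\<close> unfolding multi_idx_def by simp
  then have c: "continuous_on U (Dpart \<alpha> g)" using H by blast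
  show ?thesis by (rule iffD2[OF continuous_on_cong[OF refl eq] c])
qed

lemma dlist_diff:
  assumes "length s < k" "x \<in> U"
  shows "(dlist s g has_derivative (\<lambda>v. \<Sum>i\<in>UNIV. of_real (v$i) * dlist (i#s) g x)) (at x)"
proof -
  have "(dlist s g has_derivative (\<lambda>v. \<Sum>i\<in>UNIV. of_real (v$i) * pd i (dlist s g) x)) (at x)"
  proof (rule cp[OF U assms(2)])
    fix y i assume "y \<in> U"
    have "length (i # s) \<le> k" using assms(1) by simp
    then have "dlist_ok U (i # s) g" using sym_list[OF U H] by blast
    then show "pd_exists i (dlist s g) y" using \<open>y \<in> U\<close> by simp
  next
    fix i
    have "length (i # s) \<le> k" using assms(1) by simp
    then have "continuous_on U (dlist (i # s) g)" by (rule dlist_cont)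
    then show "continuous_on U (pd i (dlist s g))" by simp
  qed
  then show ?thesis by simp
qed

lemma dlist_bound:
  assumes "length s \<le> k" "x \<in> S" "S \<subseteq> U"
    and B: "\<And>\<beta>. \<beta> \<in> multi_idx k \<Longrightarrow> bounded (Dpart \<beta> g ` U)"
  shows "cmod (dlist s g x) \<le> (\<Sum>\<beta>\<in>multi_idx k. (SUP y\<in>S. cmod (Dpart \<beta> g y)))"
proof -
  from sym_list[OF U H assms(1)] obtain \<alpha> where s\<alpha>: "(\<Sum>l\<in>UNIV. \<alpha> l) = length s"
    and eq: "\<And>x. x \<in> U \<Longrightarrow> dlist s g x = Dpart \<alpha> g x" by blast
  have \<alpha>k: "\<alpha> \<in> multi_idx k" using s\<alpha> assms(1) unfolding multi_idx_def by simp
  have bdd: "bdd_above ((\<lambda>y. cmod (Dpart \<beta> g y)) ` S)" if b: "\<beta> \<in> multi_idx k" for \<beta>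
  proof -
    obtain M where M: "\<And>z. z \<in> Dpart \<beta> g ` U \<Longrightarrow> norm z \<le> M" using B[OF b] unfolding bounded_iff by blast
    show ?thesis by (rule bdd_aboveI2[where M=M]) (use M assms(3) in auto)
  qed
  have "cmod (dlist s g x) = cmod (Dpart \<alpha> g x)" using eq assms(2,3) by auto
  also have "\<dots> \<le> (SUP y\<in>S. cmod (Dpart \<alpha> g y))" by (rule cSUP_upper[OF assms(2) bdd[OF \<alpha>k]])
  also have "\<dots> \<le> (\<Sum>\<beta>\<in>multi_idx k. (SUP y\<in>S. cmod (Dpart \<beta> g y)))"
  proof (rule member_le_sum[OF \<alpha>k _ finite_multi_idx])
    fix \<beta> assume "\<beta> \<in> multi_idx k - {\<alpha>}"
    then have "\<beta> \<in> multi_idx k" by simp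
    have "0 \<le> cmod (Dpart \<beta> g x)" by simp
    also have "\<dots> \<le> (SUP y\<in>S. cmod (Dpart \<beta> g y))" by (rule cSUP_upper[OF assms(2) bdd[OF \<open>\<beta> \<in> multi_idx k\<close>]])
    finally show "0 \<le> (SUP y\<in>S. cmod (Dpart \<beta> g y))" .
  qed
  finally show ?thesis .
qed

end


fun wv :: "nat option \<Rightarrow> real \<Rightarrow> real" where
  "wv None x = 1"
| "wv (Some n) x = sin (x + real n * pi / 2)"

type_synonym fac = "bool \<times> nat option \<times> nat option"

definition fval :: "fac \<Rightarrow> real^2 \<Rightarrow> real" where
  "fval a p = (if fst a then 1 else 0) * wv (fst (snd a)) (p$1) * wv (snd (snd a)) (p$2)"

definition fder :: "2 \<Rightarrow> fac \<Rightarrow> fac" where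
  "fder j a = (if j = 1 then (fst a \<and> fst (snd a) \<noteq> None, map_option Suc (fst (snd a)), snd (snd a))
                else (fst a \<and> snd (snd a) \<noteq> None, fst (snd a), map_option Suc (snd (snd a))))"

lemma wv_deriv:
  "((\<lambda>t. wv ww (x + t)) has_real_derivative ((if ww = None then 0 else 1) * wv (map_option Suc ww) x)) (at 0)"
proof (cases ww)
  case None
  then show ?thesis by simp
next
  case (Some n)
  have "((\<lambda>t. sin (x + t + real n * pi / 2)) has_real_derivative cos (x + 0 + real n * pi / 2)) (at 0)"
    by (auto intro!: derivative_eq_intros)
  moreover have "cos (x + 0 + real n * pi / 2) = sin (x + real (Suc n) * pi / 2)"
  proof -
    have c: "sin (y + pi / 2) = cos y" for y by (simp add: sin_add)
    have "x + real (Suc n) * pi / 2 = (x + real n * pi / 2) + pi / 2" by (simp add: algebra_simps add_divide_distrib)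
    then have "sin (x + real (Suc n) * pi / 2) = sin ((x + real n * pi / 2) + pi / 2)" by (simp only:)
    also have "\<dots> = cos (x + real n * pi / 2)" by (rule c)
    finally show ?thesis by simp
  qed
  ultimately show ?thesis using Some by simp
qed

lemma wv_bound: "\<bar>wv ww x\<bar> \<le> 1"
  by (cases ww) auto

lemma fval_bound: "\<bar>fval a p\<bar> \<le> 1"
  unfolding fval_def using wv_bound[of "fst (snd a)" "p$1"] wv_bound[of "snd (snd a)" "p$2"]
  by (auto simp: abs_mult intro: mult_le_one)

lemma axis2_nth: "(axis (1::2) (1::real)) $ 1 = 1" "(axis (1::2) (1::real)) $ 2 = 0"
    "(axis (2::2) (1::real)) $ 1 = 0" "(axis (2::2) (1::real)) $ 2 = 1"
  by (simp_all add: axis_def)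

lemma fval_deriv:
  "((\<lambda>t. fval a (p + t *\<^sub>R axis j 1)) has_real_derivative fval (fder j a) p) (at 0)"
proof -
  obtain b o1 o2 where a: "a = (b, o1, o2)" by (cases a) auto
  consider "j = 1" | "j = 2" using exhaust_2 by blast
  then show ?thesis
  proof cases
    case 1
    have "((\<lambda>t. (if b then 1 else 0) * wv o1 (p$1 + t) * wv o2 (p$2)) has_real_derivative
        (if b then 1 else 0) * ((if o1 = None then 0 else 1) * wv (map_option Suc o1) (p$1)) * wv o2 (p$2)) (at 0)"
      by (intro DERIV_cmult_right DERIV_cmult wv_deriv)
    moreover have "(\<lambda>t. fval a (p + t *\<^sub>R axis j 1)) = (\<lambda>t. (if b then 1 else 0) * wv o1 (p$1 + t) * wv o2 (p$2))"
      by (simp add: a 1 fval_def axis2_nth)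
    moreover have "fval (fder j a) p = (if b then 1 else 0) * ((if o1 = None then 0 else 1) * wv (map_option Suc o1) (p$1)) * wv o2 (p$2)"
      by (cases o1) (simp_all add: a 1 fval_def fder_def)
    ultimately show ?thesis by simp
  next
    case 2
    have "((\<lambda>t. (if b then 1 else 0) * wv o1 (p$1) * wv o2 (p$2 + t)) has_real_derivative
        (if b then 1 else 0) * wv o1 (p$1) * ((if o2 = None then 0 else 1) * wv (map_option Suc o2) (p$2))) (at 0)"
      by (intro DERIV_cmult wv_deriv)
    moreover have "(\<lambda>t. fval a (p + t *\<^sub>R axis j 1)) = (\<lambda>t. (if b then 1 else 0) * wv o1 (p$1) * wv o2 (p$2 + t))"
      by (simp add: a 2 fval_def axis2_nth)
    moreover have "fval (fder j a) p = (if b then 1 else 0) * wv o1 (p$1) * ((if o2 = None then 0 else 1) * wv (map_option Suc o2) (p$2))"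
      by (cases o2) (simp_all add: a 2 fval_def fder_def)
    ultimately show ?thesis by simp
  qed
qed

definition phif :: "3 \<Rightarrow> fac" where
  "phif i = (if i = 1 then (True, Some 1, Some 0) else if i = 2 then (True, Some 0, Some 0) else (True, None, Some 1))"

lemma phif_val: "fval (phif i) p = dfs_phi p $ i"
proof -
  have c: "sin (y + pi / 2) = cos y" for y by (simp add: sin_add)
  consider "i = 1" | "i = 2" | "i = 3" using exhaust_3 by blast
  then show ?thesis by cases (simp_all add: phif_def fval_def dfs_phi_def c)
qed

lemma phi_expand: "dfs_phi q = (\<Sum>i\<in>UNIV. fval (phif i) q *\<^sub>R (axis i 1 :: real^3))"
  using basis_expansion[of "dfs_phi q"] by (simp add: phif_val scalar_mult_eq_scaleR)

lemma phi_vd: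
  "((\<lambda>t. dfs_phi (p + t *\<^sub>R axis j 1)) has_vector_derivative
     (\<Sum>i\<in>UNIV. fval (fder j (phif i)) p *\<^sub>R (axis i 1 :: real^3))) (at 0)"
proof -
  have "((\<lambda>t. \<Sum>i\<in>UNIV. fval (phif i) (p + t *\<^sub>R axis j 1) *\<^sub>R (axis i 1 :: real^3)) has_vector_derivative
     (\<Sum>i\<in>UNIV. fval (fder j (phif i)) p *\<^sub>R (axis i 1 :: real^3))) (at 0)"
  proof (rule has_vector_derivative_sum)
    fix i :: 3
    have "((\<lambda>t. fval (phif i) (p + t *\<^sub>R axis j 1) *\<^sub>R (axis i 1 :: real^3)) has_vector_derivative
      (fval (phif i) (p + 0 *\<^sub>R axis j 1) *\<^sub>R 0 + fval (fder j (phif i)) p *\<^sub>R (axis i 1 :: real^3))) (at 0)"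
      by (rule has_vector_derivative_scaleR[OF fval_deriv has_vector_derivative_const])
    then show "((\<lambda>t. fval (phif i) (p + t *\<^sub>R axis j 1) *\<^sub>R (axis i 1 :: real^3)) has_vector_derivative
      fval (fder j (phif i)) p *\<^sub>R (axis i 1 :: real^3)) (at 0)" by simp
  qed
  then show ?thesis by (simp only: phi_expand[symmetric])
qed

lemma chain_phi:
  fixes F :: "real^3 \<Rightarrow> complex"
  assumes "(F has_derivative (\<lambda>v. \<Sum>i\<in>UNIV. of_real (v$i) * c i)) (at (dfs_phi p))"
  shows "((\<lambda>t. F (dfs_phi (p + t *\<^sub>R axis j 1))) has_vector_derivative
          (\<Sum>i\<in>UNIV. of_real (fval (fder j (phif i)) p) * c i)) (at 0)"
proof -
  define V where "V = (\<Sum>i\<in>UNIV. fval (fder j (phif i)) p *\<^sub>R (axis i 1 :: real^3))"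
  have V: "V $ i = fval (fder j (phif i)) p" for i
    unfolding V_def by (simp add: sum_axis_nth2)
  have d1: "((\<lambda>t. dfs_phi (p + t *\<^sub>R axis j 1)) has_derivative (\<lambda>t. t *\<^sub>R V)) (at 0)"
    using phi_vd unfolding V_def has_vector_derivative_def .
  have d2: "(F has_derivative (\<lambda>v. \<Sum>i\<in>UNIV. of_real (v$i) * c i)) (at ((\<lambda>t. dfs_phi (p + t *\<^sub>R axis j 1)) 0))"
    using assms by simp
  have "((F \<circ> (\<lambda>t. dfs_phi (p + t *\<^sub>R axis j 1))) has_derivative
        ((\<lambda>v. \<Sum>i\<in>UNIV. of_real (v$i) * c i) \<circ> (\<lambda>t. t *\<^sub>R V))) (at 0)"
    by (rule diff_chain_at[OF d1 d2])
  moreover have "((\<lambda>v. \<Sum>i\<in>UNIV. of_real (v$i) * c i) \<circ> (\<lambda>t. t *\<^sub>R V)) =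
      (\<lambda>t. t *\<^sub>R (\<Sum>i\<in>UNIV. of_real (fval (fder j (phif i)) p) * c i))"
  proof (rule ext)
    fix t :: real
    have h: "complex_of_real (t * a) * b = t *\<^sub>R (complex_of_real a * b)" for a b
      by (simp add: scaleR_conv_of_real)
    show "((\<lambda>v. \<Sum>i\<in>UNIV. of_real (v$i) * c i) \<circ> (\<lambda>t. t *\<^sub>R V)) t =
      t *\<^sub>R (\<Sum>i\<in>UNIV. of_real (fval (fder j (phif i)) p) * c i)"
      by (simp add: V scaleR_sum_right h del: of_real_mult)
  qed
  ultimately show ?thesis unfolding has_vector_derivative_def by (simp add: o_def)
qed

definition P :: "fac list \<Rightarrow> real^2 \<Rightarrow> real" where
  "P fs p = prod_list (map (\<lambda>a. fval a p) fs)"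

fun prd :: "2 \<Rightarrow> fac list \<Rightarrow> fac list list" where
  "prd j [] = []"
| "prd j (a # fs) = (fder j a # fs) # map ((#) a) (prd j fs)"

lemma length_prd: "length (prd j fs) = length fs"
  by (induction fs) auto

lemma P_deriv:
  "((\<lambda>t. P fs (p + t *\<^sub>R axis j 1)) has_real_derivative (\<Sum>fs'\<leftarrow>prd j fs. P fs' p)) (at 0)"
proof (induction fs)
  case Nil
  then show ?case by (simp add: P_def)
next
  case (Cons a fs)
  have "((\<lambda>t. fval a (p + t *\<^sub>R axis j 1) * P fs (p + t *\<^sub>R axis j 1)) has_real_derivative
      fval (fder j a) p * P fs (p + 0 *\<^sub>R axis j 1) + (\<Sum>fs'\<leftarrow>prd j fs. P fs' p) * fval a (p + 0 *\<^sub>R axis j 1)) (at 0)"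
    by (rule DERIV_mult[OF fval_deriv Cons.IH])
  moreover have "(\<Sum>fs'\<leftarrow>prd j (a # fs). P fs' p) =
      fval (fder j a) p * P fs p + (\<Sum>fs'\<leftarrow>prd j fs. P fs' p) * fval a p"
    by (simp add: P_def o_def sum_list_const_mult algebra_simps)
  ultimately show ?case by (simp add: P_def)
qed

lemma P_bound: "\<bar>P fs p\<bar> \<le> 1"
  unfolding P_def
proof (induction fs)
  case (Cons a fs)
  then show ?case using fval_bound[of a p] by (simp add: abs_mult mult_le_one)
qed simp

lemma fval_cont: "continuous_on UNIV (fval a)"
proof -
  have w: "continuous_on UNIV (\<lambda>x. wv ww x)" for ww by (cases ww) (auto intro!: continuous_intros)
  show ?thesis unfolding fval_def
    by (intro continuous_intros continuous_on_compose2[OF w] linear_continuous_on bounded_linear_vec_nth) auto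
qed

lemma P_cont: "continuous_on UNIV (P fs)"
  unfolding P_def by (induction fs) (auto intro!: continuous_intros fval_cont)


type_synonym trm = "fac list \<times> 3 list"

definition tval :: "(real^3 \<Rightarrow> complex) \<Rightarrow> trm \<Rightarrow> real^2 \<Rightarrow> complex" where
  "tval g t p = of_real (P (fst t) p) * dlist (snd t) g (dfs_phi p)"

definition tder :: "2 \<Rightarrow> trm \<Rightarrow> trm list" where
  "tder j t = map (\<lambda>fs'. (fs', snd t)) (prd j (fst t)) @ map (\<lambda>i. (fder j (phif i) # fst t, i # snd t)) [1,2,3]"

fun T :: "2 list \<Rightarrow> trm list" where
  "T [] = [([], [])]"
| "T (j # l) = concat (map (tder j) (T l))"

definition sval :: "(real^3 \<Rightarrow> complex) \<Rightarrow> trm list \<Rightarrow> real^2 \<Rightarrow> complex" where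
  "sval g ts p = (\<Sum>t\<leftarrow>ts. tval g t p)"

lemma sum_list_ofreal: "(\<Sum>x\<leftarrow>L. of_real (f x) * D) = of_real (\<Sum>x\<leftarrow>L. f x) * (D::complex)"
  by (induction L) (auto simp: algebra_simps)

lemma sum_list_concat_map: "(\<Sum>t\<leftarrow>concat (map h L). f t) = (\<Sum>t\<leftarrow>L. \<Sum>t'\<leftarrow>h t. f t')"
  by (induction L) auto

lemma sum_list_vd:
  assumes "\<And>t. t \<in> set L \<Longrightarrow> ((\<lambda>\<tau>. F t \<tau>) has_vector_derivative D t) (at 0)"
  shows "((\<lambda>\<tau>. \<Sum>t\<leftarrow>L. F t \<tau>) has_vector_derivative (\<Sum>t\<leftarrow>L. D t)) (at 0)"
  using assms
proof (induction L)
  case Nil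
  then show ?case by (simp add: has_vector_derivative_const)
next
  case (Cons a L)
  have "((\<lambda>\<tau>. F a \<tau> + (\<Sum>t\<leftarrow>L. F t \<tau>)) has_vector_derivative (D a + (\<Sum>t\<leftarrow>L. D t))) (at 0)"
    by (rule has_vector_derivative_add) (use Cons in auto)
  then show ?case by simp
qed

lemma sum_list_norm_bound:
  fixes f :: "'a \<Rightarrow> 'b::real_normed_vector"
  assumes "\<And>t. t \<in> set L \<Longrightarrow> norm (f t) \<le> M"
  shows "norm (\<Sum>t\<leftarrow>L. f t) \<le> real (length L) * M"
  using assms
proof (induction L)
  case (Cons a L)
  have "norm (\<Sum>t\<leftarrow>a # L. f t) \<le> norm (f a) + norm (\<Sum>t\<leftarrow>L. f t)"
    by (simp add: norm_triangle_ineq)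
  also have "\<dots> \<le> M + real (length L) * M" using Cons by (intro add_mono) auto
  finally show ?case by (simp add: algebra_simps)
qed simp

lemma sum_list_cont:
  fixes F :: "'a \<Rightarrow> 'c::topological_space \<Rightarrow> complex"
  assumes "\<And>t. t \<in> set L \<Longrightarrow> continuous_on S (F t)"
  shows "continuous_on S (\<lambda>p. \<Sum>t\<leftarrow>L. F t p)"
  using assms
proof (induction L)
  case (Cons a L)
  have "continuous_on S (\<lambda>p. F a p + (\<Sum>t\<leftarrow>L. F t p))"
    by (rule continuous_on_add) (use Cons in auto)
  then show ?case by simp
qed (simp add: continuous_on_const)

lemma prd_len: "fs' \<in> set (prd j fs) \<Longrightarrow> length fs' = length fs"
  by (induction fs arbitrary: fs') auto

lemma T_len: "t \<in> set (T l) \<Longrightarrow> length (snd t) \<le> length l \<and> length (fst t) = length (snd t)"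
proof (induction l arbitrary: t)
  case Nil
  then show ?case by simp
next
  case (Cons j l)
  then obtain t0 where t0: "t0 \<in> set (T l)" "t \<in> set (tder j t0)" by auto
  note IH = Cons.IH[OF t0(1)]
  from t0(2) show ?case unfolding tder_def using IH prd_len by auto
qed

lemma length_tder: "length (tder j t) = length (fst t) + 3"
  by (simp add: tder_def length_prd)

lemma length_concat_bound:
  assumes "\<And>t. t \<in> set L \<Longrightarrow> length (h t) \<le> M"
  shows "length (concat (map h L)) \<le> length L * M"
  using assms by (induction L) (auto simp: add_mono)

lemma T_count: "2 * length (T l) \<le> fact (length l + 2)"
proof (induction l)
  case Nil
  then show ?case by (simp add: numeral_2_eq_2)
next
  case (Cons j l)
  have "length (T (j # l)) \<le> length (T l) * (length l + 3)"
    unfolding T.simps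
  proof (rule length_concat_bound)
    fix t assume "t \<in> set (T l)"
    then show "length (tder j t) \<le> length l + 3" using T_len[of t l] by (simp add: length_tder)
  qed
  then have "2 * length (T (j # l)) \<le> (2 * length (T l)) * (length l + 3)" by simp
  also have "\<dots> \<le> fact (length l + 2) * (length l + 3)" using Cons.IH by (rule mult_right_mono) simp
  also have "\<dots> = fact (length (j # l) + 2)"
    by (simp add: fact_Suc algebra_simps)
  finally show ?case .
qed

lemma phi_S2: "dfs_phi p \<in> S2"
proof -
  have e1: "(cos a)\<^sup>2 * (sin b)\<^sup>2 + (sin a)\<^sup>2 * (sin b)\<^sup>2 = (sin b)\<^sup>2" for a b :: real
  proof -
    have "(cos a)\<^sup>2 * (sin b)\<^sup>2 + (sin a)\<^sup>2 * (sin b)\<^sup>2 = ((cos a)\<^sup>2 + (sin a)\<^sup>2) * (sin b)\<^sup>2"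
      by (simp only: distrib_right)
    then show ?thesis by simp
  qed
  have "(norm (dfs_phi p))\<^sup>2 = 1"
    by (simp add: norm_vec_def L2_set_def sum_3 dfs_phi_def power_mult_distrib e1)
  then have "norm (dfs_phi p) = 1 \<or> norm (dfs_phi p) = -1" by (simp only: power2_eq_1_iff)
  then have "norm (dfs_phi p) = 1" using norm_ge_zero[of "dfs_phi p"] by linarith
  then show ?thesis by simp
qed

lemma phi_cont: "continuous_on UNIV dfs_phi"
proof -
  have "continuous_on UNIV (\<lambda>q. \<Sum>i\<in>UNIV. fval (phif i) q *\<^sub>R (axis i 1 :: real^3))"
    by (intro continuous_intros continuous_on_compose2[OF fval_cont]) auto
  then show ?thesis by (simp only: phi_expand[symmetric])
qed


definition GG :: "(real^3 \<Rightarrow> complex) \<Rightarrow> real^2 \<Rightarrow> complex" where "GG g p = g (dfs_phi p)"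

context
  fixes g :: "real^3 \<Rightarrow> complex" and U and k :: nat
  assumes U: "open U"
    and H: "\<And>\<beta>. \<beta> \<in> multi_idx k \<Longrightarrow> Dpart_exists U \<beta> g \<and> continuous_on U (Dpart \<beta> g)"
    and S2U: "S2 \<subseteq> U"
begin

lemma phiU: "dfs_phi p \<in> U" using phi_S2 S2U by blast

lemma tval_deriv:
  assumes "length (snd t) < k"
  shows "((\<lambda>\<tau>. tval g t (p + \<tau> *\<^sub>R axis j 1)) has_vector_derivative (\<Sum>t'\<leftarrow>tder j t. tval g t' p)) (at 0)"
proof -
  obtain fs s where t: "t = (fs, s)" by (cases t) auto
  have ls: "length s < k" using assms t by simp
  have d1: "((\<lambda>\<tau>. complex_of_real (P fs (p + \<tau> *\<^sub>R axis j 1))) has_vector_derivative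
      of_real (\<Sum>fs'\<leftarrow>prd j fs. P fs' p)) (at 0)"
    by (rule has_vector_derivative_of_real[OF P_deriv])
  have d2: "((\<lambda>\<tau>. dlist s g (dfs_phi (p + \<tau> *\<^sub>R axis j 1))) has_vector_derivative
      (\<Sum>i\<in>UNIV. of_real (fval (fder j (phif i)) p) * dlist (i # s) g (dfs_phi p))) (at 0)"
    by (rule chain_phi[OF dlist_diff[OF U H ls phiU]])
  have "((\<lambda>\<tau>. complex_of_real (P fs (p + \<tau> *\<^sub>R axis j 1)) * dlist s g (dfs_phi (p + \<tau> *\<^sub>R axis j 1))) has_vector_derivative
      (complex_of_real (P fs (p + 0 *\<^sub>R axis j 1)) * (\<Sum>i\<in>UNIV. of_real (fval (fder j (phif i)) p) * dlist (i # s) g (dfs_phi p))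
      + of_real (\<Sum>fs'\<leftarrow>prd j fs. P fs' p) * dlist s g (dfs_phi (p + 0 *\<^sub>R axis j 1)))) (at 0)"
    by (rule has_vector_derivative_mult[OF d1 d2])
  moreover have "(\<Sum>t'\<leftarrow>tder j t. tval g t' p) =
      complex_of_real (P fs p) * (\<Sum>i\<in>UNIV. of_real (fval (fder j (phif i)) p) * dlist (i # s) g (dfs_phi p))
      + of_real (\<Sum>fs'\<leftarrow>prd j fs. P fs' p) * dlist s g (dfs_phi p)"
  proof -
    have "(\<Sum>t'\<leftarrow>tder j t. tval g t' p) = (\<Sum>fs'\<leftarrow>prd j fs. of_real (P fs' p) * dlist s g (dfs_phi p))
       + (\<Sum>i\<leftarrow>[1,2,3]. of_real (P (fder j (phif i) # fs) p) * dlist (i # s) g (dfs_phi p))"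
      unfolding tder_def t by (simp add: tval_def o_def)
    also have "(\<Sum>fs'\<leftarrow>prd j fs. of_real (P fs' p) * dlist s g (dfs_phi p)) =
        of_real (\<Sum>fs'\<leftarrow>prd j fs. P fs' p) * dlist s g (dfs_phi p)"
      by (rule sum_list_ofreal)
    also have "(\<Sum>i\<leftarrow>[1,2,3]. of_real (P (fder j (phif i) # fs) p) * dlist (i # s) g (dfs_phi p)) =
       complex_of_real (P fs p) * (\<Sum>i\<in>UNIV. of_real (fval (fder j (phif i)) p) * dlist (i # s) g (dfs_phi p))"
      by (simp add: sum_3 P_def algebra_simps)
    finally show ?thesis by (simp add: algebra_simps)
  qed
  ultimately show ?thesis unfolding t by (simp add: tval_def)
qed


lemma G_rep: "length l \<le> k \<Longrightarrow> dlist_ok UNIV l (GG g) \<and> dlist l (GG g) = sval g (T l)"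
proof (induction l)
  case Nil
  show ?case by (simp add: fun_eq_iff GG_def sval_def tval_def P_def)
next
  case (Cons j l)
  then have ll: "length l < k" by simp
  with Cons.IH have ok: "dlist_ok UNIV l (GG g)" and eq: "dlist l (GG g) = sval g (T l)" by auto
  have R: "pd_exists j (sval g (T l)) p \<and> pd j (sval g (T l)) p = sval g (T (j # l)) p" for p
  proof (rule pd_intro)
    have "((\<lambda>\<tau>. \<Sum>t\<leftarrow>T l. tval g t (p + \<tau> *\<^sub>R axis j 1)) has_vector_derivative
        (\<Sum>t\<leftarrow>T l. \<Sum>t'\<leftarrow>tder j t. tval g t' p)) (at 0)"
    proof (rule sum_list_vd)
      fix t assume "t \<in> set (T l)"
      then have "length (snd t) < k" using T_len[of t l] ll by simp
      then show "((\<lambda>\<tau>. tval g t (p + \<tau> *\<^sub>R axis j 1)) has_vector_derivative (\<Sum>t'\<leftarrow>tder j t. tval g t' p)) (at 0)"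
        by (rule tval_deriv)
    qed
    then show "((\<lambda>\<tau>. sval g (T l) (p + \<tau> *\<^sub>R axis j 1)) has_vector_derivative sval g (T (j # l)) p) (at 0)"
      by (simp add: sval_def sum_list_concat_map)
  qed
  show ?case
  proof
    show "dlist_ok UNIV (j # l) (GG g)" using ok R eq by simp
    have "dlist (j # l) (GG g) = pd j (sval g (T l))" by (simp add: eq)
    then show "dlist (j # l) (GG g) = sval g (T (j # l))" using R by (simp add: fun_eq_iff del: T.simps)
  qed
qed

lemma tval_cont: "length (snd t) \<le> k \<Longrightarrow> continuous_on UNIV (tval g t)"
  unfolding tval_def
  by (intro continuous_intros continuous_on_of_real P_cont
      continuous_on_compose2[OF dlist_cont[OF U H] phi_cont]) (auto simp: phiU)

lemma G_cont: "length l \<le> k \<Longrightarrow> continuous_on UNIV (dlist l (GG g))"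
  using G_rep[of l] unfolding sval_def
  by (auto intro!: sum_list_cont tval_cont dest: T_len)

lemma G_bound:
  assumes "length l \<le> k" and B: "\<And>\<beta>. \<beta> \<in> multi_idx k \<Longrightarrow> bounded (Dpart \<beta> g ` U)"
  shows "cmod (dlist l (GG g) p) \<le> real (length (T l)) * ext_seminorm k g"
proof -
  have "cmod (sval g (T l) p) \<le> real (length (T l)) * ext_seminorm k g"
    unfolding sval_def
  proof (rule sum_list_norm_bound)
    fix t assume "t \<in> set (T l)"
    then have ls: "length (snd t) \<le> k" using T_len[of t l] assms(1) by simp
    have "cmod (dlist (snd t) g (dfs_phi p)) \<le> ext_seminorm k g"
      unfolding ext_seminorm_def by (rule dlist_bound[OF U H ls phi_S2 S2U B])
    then show "cmod (tval g t p) \<le> ext_seminorm k g"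
      unfolding tval_def norm_mult norm_of_real
      using P_bound[of "fst t" p] by (smt (verit) mult_left_le_one_le norm_ge_zero abs_ge_zero)
  qed
  then show ?thesis using G_rep[OF assms(1)] by simp
qed

end


lemma phi_periodic: "dfs_phi (x + (2*pi) *\<^sub>R axis i 1) = dfs_phi x"
proof -
  consider "i = 1" | "i = 2" using exhaust_2 by blast
  then show ?thesis by cases (simp_all add: dfs_phi_def axis2_nth sin_periodic cos_periodic)
qed

lemma pd_periodic:
  assumes "\<And>y. F (y + c) = F y"
  shows "pd_exists i F (x + c) = pd_exists i F x \<and> pd i F (x + c) = pd i F x"
proof -
  have "(\<lambda>t. F (x + c + t *\<^sub>R axis i 1)) = (\<lambda>t. F (x + t *\<^sub>R axis i 1))"
  proof (rule ext)
    fix t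
    have e: "x + c + t *\<^sub>R axis i 1 = (x + t *\<^sub>R axis i 1) + c" by (simp add: algebra_simps)
    have "F (x + c + t *\<^sub>R axis i 1) = F ((x + t *\<^sub>R axis i 1) + c)" by (simp only: e)
    also have "\<dots> = F (x + t *\<^sub>R axis i 1)" by (rule assms)
    finally show "F (x + c + t *\<^sub>R axis i 1) = F (x + t *\<^sub>R axis i 1)" .
  qed
  then show ?thesis unfolding pd_exists_def pd_def by simp
qed

lemma dlist_periodic:
  assumes "\<And>y. F (y + c) = F y"
  shows "dlist l F (y + c) = dlist l F y"
proof (induction l arbitrary: y)
  case Nil
  then show ?case using assms by simp
next
  case (Cons i l)
  then show ?case using pd_periodic[of "dlist l F" c i y] by simp
qed

lemma nat_periodic:
  fixes F :: "real^'n \<Rightarrow> 'b"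
  assumes "\<And>x. F (x + (2*pi) *\<^sub>R axis i 1) = F x"
  shows "F (x + (2*pi*real n) *\<^sub>R axis i 1) = F x"
proof (induction n)
  case 0
  then show ?case by simp
next
  case (Suc n)
  have e: "x + (2*pi*real (Suc n)) *\<^sub>R axis i 1 = (x + (2*pi*real n) *\<^sub>R axis i 1) + (2*pi) *\<^sub>R axis i 1"
    by (simp add: algebra_simps)
  have "F (x + (2*pi*real (Suc n)) *\<^sub>R axis i 1) = F ((x + (2*pi*real n) *\<^sub>R axis i 1) + (2*pi) *\<^sub>R axis i 1)"
    by (simp only: e)
  also have "\<dots> = F (x + (2*pi*real n) *\<^sub>R axis i 1)" by (rule assms)
  also have "\<dots> = F x" by (rule Suc)
  finally show ?case .
qed

lemma int_periodic:
  fixes F :: "real^'n \<Rightarrow> 'b"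
  assumes "\<And>x. F (x + (2*pi) *\<^sub>R axis i 1) = F x"
  shows "F (x + (2*pi * of_int m) *\<^sub>R axis i 1) = F x"
proof (cases "m \<ge> 0")
  case True
  define n where "n = nat m"
  have "m = int n" using True by (simp add: n_def)
  then show ?thesis using nat_periodic[where F=F and i=i, OF assms, of x n] by simp
next
  case False
  define n where "n = nat (-m)"
  have m: "m = - int n" using False by (simp add: n_def)
  have "F (x + (2*pi * of_int m) *\<^sub>R axis i 1) = F ((x + (2*pi * of_int m) *\<^sub>R axis i 1) + (2*pi*real n) *\<^sub>R axis i 1)"
    using nat_periodic[where F=F and i=i, OF assms, of "x + (2*pi * of_int m) *\<^sub>R axis i 1" n] by simp
  also have "(x + (2*pi * of_int m) *\<^sub>R axis i 1) + (2*pi*real n) *\<^sub>R axis i 1 = x"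
    unfolding m by (simp add: algebra_simps)
  finally show ?thesis .
qed

lemma floor_bounds:
  fixes y c :: real
  assumes "c > 0"
  shows "c * of_int \<lfloor>y / c\<rfloor> \<le> y" "y < c * of_int \<lfloor>y / c\<rfloor> + c"
  using floor_divide_lower[OF assms, of y] floor_divide_upper[OF assms, of y]
  by (simp_all add: algebra_simps)

lemma periodic_uc:
  fixes F :: "real^2 \<Rightarrow> complex"
  assumes c: "continuous_on UNIV F" and per: "\<And>x i. F (x + (2*pi) *\<^sub>R axis i 1) = F x"
  shows "uniformly_continuous_on UNIV F"
proof -
  define K where "K = cbox (vec (-2*pi)) (vec (4*pi) :: real^2)"
  have "uniformly_continuous_on K F"
    unfolding K_def by (rule compact_uniformly_continuous[OF continuous_on_subset[OF c] compact_cbox]) simp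
  then have ucK: "\<forall>e>0. \<exists>d>0. \<forall>x\<in>K. \<forall>x'\<in>K. dist x' x < d \<longrightarrow> dist (F x') (F x) < e"
    unfolding uniformly_continuous_on_def .
  have shift: "F (z - w) = F z" if wm: "\<And>i. \<exists>m::int. w $ i = 2*pi * of_int m" for z w
  proof -
    obtain m1 where m1: "w $ 1 = 2*pi * of_int m1" using wm by blast
    obtain m2 where m2: "w $ 2 = 2*pi * of_int m2" using wm by blast
    have "z - w = (z + (2*pi * of_int (-m1)) *\<^sub>R axis 1 1) + (2*pi * of_int (-m2)) *\<^sub>R axis 2 1"
    proof -
      have "(z - w) $ i = ((z + (2*pi * of_int (-m1)) *\<^sub>R axis 1 1) + (2*pi * of_int (-m2)) *\<^sub>R axis 2 1) $ i" for i :: 2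
      proof -
        consider "i = 1" | "i = 2" using exhaust_2 by blast
        then show ?thesis by cases (simp_all add: m1 m2 axis2_nth)
      qed
      then show ?thesis by (simp add: vec_eq_iff)
    qed
    then have "F (z - w) = F ((z + (2*pi * of_int (-m1)) *\<^sub>R axis 1 1) + (2*pi * of_int (-m2)) *\<^sub>R axis 2 1)"
      by (simp only:)
    also have "\<dots> = F (z + (2*pi * of_int (-m1)) *\<^sub>R axis 1 1)"
      by (rule int_periodic[where F=F and i=2, OF per])
    also have "\<dots> = F z" by (rule int_periodic[where F=F and i=1, OF per])
    finally show ?thesis .
  qed
  show ?thesis
    unfolding uniformly_continuous_on_def
  proof (intro allI impI)
    fix e :: real assume "e > 0"
    with ucK obtain d where d: "d > 0" and dK: "\<forall>x\<in>K. \<forall>x'\<in>K. dist x' x < d \<longrightarrow> dist (F x') (F x) < e"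
      by blast
    show "\<exists>d>0. \<forall>x\<in>UNIV. \<forall>x'\<in>UNIV. dist x' x < d \<longrightarrow> dist (F x') (F x) < e"
    proof (intro exI[of _ "min d 1"] conjI ballI impI)
      show "min d 1 > 0" using d by simp
      fix x y :: "real^2" assume dxy: "dist y x < min d 1"
      define w :: "real^2" where "w = (\<chi> i. 2*pi * of_int \<lfloor>x$i / (2*pi)\<rfloor>)"
      have wi: "\<exists>m::int. w $ i = 2*pi * of_int m" for i unfolding w_def by auto
      have xK: "x - w \<in> K"
        unfolding K_def mem_box_cart
      proof
        fix i :: 2
        have "2*pi * of_int \<lfloor>x$i / (2*pi)\<rfloor> \<le> x$i" by (rule floor_bounds(1)) simp
        moreover have "x$i < 2*pi * of_int \<lfloor>x$i / (2*pi)\<rfloor> + 2*pi" by (rule floor_bounds(2)) simp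
        ultimately show "vec (-2*pi) $ i \<le> (x - w) $ i \<and> (x - w) $ i \<le> vec (4*pi) $ i"
          using pi_gt_zero by (simp add: w_def)
      qed
      have yK: "y - w \<in> K"
        unfolding K_def mem_box_cart
      proof
        fix i :: 2
        have "\<bar>(y - x) $ i\<bar> \<le> norm (y - x)" by (rule component_le_norm_cart)
        then have yx: "\<bar>y$i - x$i\<bar> < 1" using dxy by (simp add: dist_norm)
        have "2*pi * of_int \<lfloor>x$i / (2*pi)\<rfloor> \<le> x$i" by (rule floor_bounds(1)) simp
        moreover have "x$i < 2*pi * of_int \<lfloor>x$i / (2*pi)\<rfloor> + 2*pi" by (rule floor_bounds(2)) simp
        moreover have "1 < 2 * pi" using pi_gt3 by simp
        ultimately show "vec (-2*pi) $ i \<le> (y - w) $ i \<and> (y - w) $ i \<le> vec (4*pi) $ i"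
          using yx by (simp add: w_def abs_less_iff)
      qed
      have "dist (y - w) (x - w) = dist y x" by (simp add: dist_norm)
      then have "dist (y - w) (x - w) < d" using dxy by simp
      then have "dist (F (y - w)) (F (x - w)) < e" using dK xK yK by blast
      then show "dist (F y) (F x) < e" using shift[OF wi] by simp
    qed
  qed
qed


lemma comb_Q: "(\<Sum>(a,b)\<in>{(a,b). a + b \<le> k}. fact (a + b + 2)) \<le> (fact (k + 3) :: nat)"
proof (induction k)
  case 0
  have "{(a,b). a + b \<le> (0::nat)} = {(0,0)}" by auto
  then show ?case by (simp add: numeral_3_eq_3 numeral_2_eq_2)
next
  case (Suc k)
  define Q where "Q = {(a,b). a + b \<le> k}"
  define R where "R = {(a,b). a + b = Suc k}"
  have fQ: "finite Q" unfolding Q_def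
    by (rule finite_subset[of _ "{0..k} \<times> {0..k}"]) auto
  have R: "R = (\<lambda>a. (a, Suc k - a)) ` {0..Suc k}" unfolding R_def by force
  have cR: "card R = k + 2" unfolding R by (subst card_image) (auto simp: inj_on_def)
  have fR: "finite R" unfolding R by simp
  have QR: "{(a,b). a + b \<le> Suc k} = Q \<union> R" unfolding Q_def R_def by auto
  have dis: "Q \<inter> R = {}" unfolding Q_def R_def by auto
  have "(\<Sum>(a,b)\<in>{(a,b). a + b \<le> Suc k}. fact (a + b + 2)) =
      (\<Sum>(a,b)\<in>Q. fact (a + b + 2)) + (\<Sum>(a,b)\<in>R. fact (a + b + 2) :: nat)"
    unfolding QR by (rule sum.union_disjoint[OF fQ fR dis])
  also have "(\<Sum>(a,b)\<in>R. fact (a + b + 2) :: nat) = (\<Sum>x\<in>R. fact (k + 3))"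
  proof (rule sum.cong[OF refl])
    fix x assume "x \<in> R"
    then obtain a b where x: "x = (a,b)" and ab: "a + b = Suc k" by (auto simp: R_def)
    have e: "a + b + 2 = k + 3" using ab by simp
    show "(case x of (a, b) \<Rightarrow> fact (a + b + 2)) = (fact (k + 3) :: nat)"
      unfolding x prod.case e ..
  qed
  also have "\<dots> = (k + 2) * fact (k + 3)" using cR by simp
  finally have "(\<Sum>(a,b)\<in>{(a,b). a + b \<le> Suc k}. fact (a + b + 2)) \<le> fact (k + 3) + (k + 2) * (fact (k + 3) :: nat)"
    using Suc.IH unfolding Q_def by simp
  also have "\<dots> \<le> fact (Suc k + 3)"
  proof -
    have "fact (Suc k + 3) = Suc (k + 3) * (fact (k + 3) :: nat)" by (simp only: add_Suc fact_Suc of_nat_id)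
    then show ?thesis by (simp add: algebra_simps)
  qed
  finally show ?case .
qed

lemma comb: "(\<Sum>\<beta>\<in>(multi_idx k :: (2 \<Rightarrow> nat) set). fact ((\<Sum>l\<in>UNIV. \<beta> l) + 2)) \<le> (fact (k + 3) :: nat)"
proof -
  define h where "h = (\<lambda>\<beta>::2 \<Rightarrow> nat. (\<beta> 1, \<beta> 2))"
  have bij: "bij_betw h (multi_idx k) {(a,b). a + b \<le> k}"
  proof (rule bij_betwI')
    fix x y :: "2 \<Rightarrow> nat" assume "x \<in> multi_idx k" "y \<in> multi_idx k"
    show "(h x = h y) = (x = y)"
    proof
      assume "h x = h y"
      then have "x 1 = y 1" "x 2 = y 2" unfolding h_def by auto
      then show "x = y" by (metis exhaust_2 ext)
    qed simp
  next
    fix x :: "2 \<Rightarrow> nat" assume "x \<in> multi_idx k"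
    then show "h x \<in> {(a,b). a + b \<le> k}" unfolding h_def multi_idx_def by (simp add: sum_2)
  next
    fix ab assume ab: "ab \<in> {(a,b). a + b \<le> k}"
    obtain a b where abd: "ab = (a, b)" by (cases ab) auto
    define x where "x = (\<lambda>i::2. if i = 1 then a else b)"
    have "x 1 = a" "x 2 = b" unfolding x_def by simp_all
    then show "\<exists>x\<in>multi_idx k. ab = h x"
      using ab abd unfolding h_def multi_idx_def by (intro bexI[of _ x]) (auto simp: sum_2)
  qed
  have "(\<Sum>\<beta>\<in>(multi_idx k :: (2 \<Rightarrow> nat) set). fact ((\<Sum>l\<in>UNIV. \<beta> l) + 2)) =
      (\<Sum>\<beta>\<in>multi_idx k. (\<lambda>(a,b). fact (a + b + 2) :: nat) (h \<beta>))"
    by (rule sum.cong) (auto simp: h_def sum_2)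
  also have "\<dots> = (\<Sum>(a,b)\<in>{(a,b). a + b \<le> k}. fact (a + b + 2) :: nat)"
    by (rule sum.reindex_bij_betw[OF bij])
  also have "\<dots> \<le> fact (k + 3)" by (rule comb_Q)
  finally show ?thesis .
qed

lemma length_mlist: "length (mlist \<beta>) = (\<Sum>l\<in>UNIV. \<beta> l)"
  unfolding mlist_def length_concat
  by (simp add: o_def sum_list_distinct_conv_sum_set)


context
  fixes g :: "real^3 \<Rightarrow> complex" and U and k :: nat
  assumes U: "open U"
    and H: "\<And>\<beta>. \<beta> \<in> multi_idx k \<Longrightarrow> Dpart_exists U \<beta> g \<and> continuous_on U (Dpart \<beta> g)"
    and S2U: "S2 \<subseteq> U"
    and B: "\<And>\<beta>. \<beta> \<in> multi_idx k \<Longrightarrow> bounded (Dpart \<beta> g ` U)"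
begin

lemma N_nonneg: "0 \<le> ext_seminorm k g"
proof -
  have l0: "length ([]::2 list) \<le> k" by simp
  have "cmod (dlist [] (GG g) 0) \<le> real (length (T [])) * ext_seminorm k g"
    by (rule G_bound[OF U H S2U l0 B])
  then have "cmod (GG g 0) \<le> ext_seminorm k g" by simp
  then show ?thesis using norm_ge_zero[of "GG g 0"] by linarith
qed

lemma GG_periodic: "GG g (y + (2*pi) *\<^sub>R axis i 1) = GG g y"
  by (simp add: GG_def phi_periodic)

lemma mlist_len: "\<beta> \<in> multi_idx k \<Longrightarrow> length (mlist \<beta>) \<le> k"
  by (simp add: length_mlist multi_idx_def)

lemma torus_Ck: "Ck_torus k (GG g)"
  unfolding Ck_torus_def Ck_def
proof (intro conjI ballI allI open_UNIV)
  fix \<beta> :: "2 \<Rightarrow> nat" assume b: "\<beta> \<in> multi_idx k"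
  have l: "length (mlist \<beta>) \<le> k" using b by (rule mlist_len)
  show "Dpart_exists UNIV \<beta> (GG g)"
    unfolding Dpart_exists_def using G_rep[OF U H S2U l] by simp
  show "bounded (Dpart \<beta> (GG g) ` UNIV)"
    unfolding bounded_iff Dpart_def
    using G_bound[OF U H S2U l B] by blast
  show "uniformly_continuous_on UNIV (Dpart \<beta> (GG g))"
    unfolding Dpart_def
  proof (rule periodic_uc)
    show "continuous_on UNIV (dlist (mlist \<beta>) (GG g))" by (rule G_cont[OF U H S2U l])
    show "dlist (mlist \<beta>) (GG g) (x + (2 * pi) *\<^sub>R axis i 1) = dlist (mlist \<beta>) (GG g) x" for x i
      by (rule dlist_periodic) (rule GG_periodic)
  qed
next
  fix x :: "real^2" and i
  show "GG g (x + (2 * pi) *\<^sub>R axis i 1) = GG g x" by (rule GG_periodic)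
qed

lemma torus_norm: "Ck_torus_norm k (GG g) \<le> 3/4 * fact (k+3) * ext_seminorm k g"
proof -
  let ?N = "ext_seminorm k g"
  have N: "0 \<le> ?N" by (rule N_nonneg)
  have "Ck_torus_norm k (GG g) \<le> (\<Sum>\<beta>\<in>(multi_idx k :: (2 \<Rightarrow> nat) set). real (fact ((\<Sum>l\<in>UNIV. \<beta> l) + 2)) / 2 * ?N)"
    unfolding Ck_torus_norm_def Ck_norm_def
  proof (rule sum_mono)
    fix \<beta> :: "2 \<Rightarrow> nat" assume b: "\<beta> \<in> multi_idx k"
    have l: "length (mlist \<beta>) \<le> k" using b by (rule mlist_len)
    have tc: "real (length (T (mlist \<beta>))) \<le> real (fact ((\<Sum>l\<in>UNIV. \<beta> l) + 2)) / 2"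
      using T_count[of "mlist \<beta>"] unfolding length_mlist by linarith
    show "(SUP p\<in>UNIV. cmod (Dpart \<beta> (GG g) p)) \<le> real (fact ((\<Sum>l\<in>UNIV. \<beta> l) + 2)) / 2 * ?N"
    proof (rule cSUP_least)
      fix p :: "real^2"
      have "cmod (Dpart \<beta> (GG g) p) \<le> real (length (T (mlist \<beta>))) * ?N"
        unfolding Dpart_def by (rule G_bound[OF U H S2U l B])
      also have "\<dots> \<le> real (fact ((\<Sum>l\<in>UNIV. \<beta> l) + 2)) / 2 * ?N"
        by (rule mult_right_mono[OF tc N])
      finally show "cmod (Dpart \<beta> (GG g) p) \<le> real (fact ((\<Sum>l\<in>UNIV. \<beta> l) + 2)) / 2 * ?N" .
    qed simp
  qed
  also have "\<dots> = real (\<Sum>\<beta>\<in>(multi_idx k :: (2 \<Rightarrow> nat) set). fact ((\<Sum>l\<in>UNIV. \<beta> l) + 2)) / 2 * ?N"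
    by (simp add: sum_distrib_right sum_divide_distrib)
  also have "\<dots> \<le> real (fact (k + 3)) / 2 * ?N"
  proof -
    have c: "real (\<Sum>\<beta>\<in>(multi_idx k :: (2 \<Rightarrow> nat) set). fact ((\<Sum>l\<in>UNIV. \<beta> l) + 2)) \<le> real (fact (k + 3))"
      using comb[of k] by (simp only: of_nat_le_iff)
    show ?thesis by (intro mult_right_mono divide_right_mono c N) simp
  qed
  also have "\<dots> \<le> 3/4 * fact (k+3) * ?N"
    using N by (intro mult_right_mono) (simp_all add: of_nat_fact)
  finally show ?thesis .
qed

end

theorem corollary4p4:
  fixes k :: nat and f :: "real^3 \<Rightarrow> complex"
  assumes "Ck_sphere k f"
  shows "Ck_torus k (dfs f) \<and>
         Ck_torus_norm k (dfs f) \<le> 3/4 * fact (k+3) * Ck_sphere_norm k f"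
proof -
  have facts: "open U \<and> (\<forall>\<beta>. \<beta> \<in> multi_idx k \<longrightarrow> Dpart_exists U \<beta> g \<and> continuous_on U (Dpart \<beta> g))
      \<and> S2 \<subseteq> U \<and> (\<forall>\<beta>. \<beta> \<in> multi_idx k \<longrightarrow> bounded (Dpart \<beta> g ` U)) \<and> dfs f = GG g"
    if e: "is_Ck_extension k f U g" for U g
  proof -
    have S2U: "S2 \<subseteq> U" and C: "Ck k U g" and eq: "\<And>\<xi>. \<xi> \<in> S2 \<Longrightarrow> g \<xi> = f \<xi>"
      using e unfolding is_Ck_extension_def by auto
    have "dfs f = GG g"
    proof (rule ext)
      fix p
      show "dfs f p = GG g p" unfolding dfs_def GG_def using eq[OF phi_S2[of p]] by simp
    qed
    then show ?thesis using C S2U unfolding Ck_def by (auto intro: uniformly_continuous_imp_continuous)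
  qed
  from assms obtain U0 g0 where e0: "is_Ck_extension k f U0 g0" unfolding Ck_sphere_def by blast
  note f0 = facts[OF e0]
  have part1: "Ck_torus k (dfs f)"
    using torus_Ck[of U0 k g0] f0 by simp
  define C where "C = 3/4 * (fact (k+3) :: real)"
  have C: "C > 0" unfolding C_def by simp
  define A where "A = {ext_seminorm k g | g U. is_Ck_extension k f U g}"
  have Ane: "A \<noteq> {}" using e0 unfolding A_def by blast
  have lb: "Ck_torus_norm k (dfs f) / C \<le> a" if "a \<in> A" for a
  proof -
    from that obtain g U where a: "a = ext_seminorm k g" and e: "is_Ck_extension k f U g"
      unfolding A_def by blast
    note fe = facts[OF e]
    have "Ck_torus_norm k (dfs f) \<le> C * a"
      using torus_norm[of U k g] fe unfolding a C_def by simp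
    then show ?thesis using C by (simp add: divide_le_eq mult.commute)
  qed
  have "Ck_torus_norm k (dfs f) / C \<le> Inf A" by (rule cInf_greatest[OF Ane lb])
  then have "Ck_torus_norm k (dfs f) \<le> C * Inf A" using C by (simp add: divide_le_eq mult.commute)
  then show ?thesis using part1 unfolding C_def A_def Ck_sphere_norm_def by simp
qed

end
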